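(* Let $S$ be a smooth projective surface over $\mathbb{C}$ with $b_1(S)=0$ and $p_g(S)>0$, let $H$ be a polarization and $c_1\in H^2(S,\mathbb{Z})$ algebraic, such that there are no rank 3 strictly Gieseker $H$-semistable sheaves on $S$ with first Chern class $c_1$. Write $\psi_{S,c_1}(x,y)=\sum_{n\ge 0}\psi_n(y)x^n$ and assume that for every $c_2$ one has $\overline{\chi}^{\mathrm{vir}}_{-y}(M_S^H(3,c_1,c_2))=\psi_{\mathrm{vd}}(y)$ with $\mathrm{vd}=6c_2-2c_1^2-8\chi$. Then, with $q=e^{2\pi i\tau}$, $y=e^{2\pi i z}$, \begin{align*} \frac{\mathsf{Z}^{\mathrm{inst}}_{S,H,3,c_1}(q,y)}{(y^{1/2}-y^{-1/2})^{\chi}}=\;&3\Big(\frac{1}{3\Phi(\tfrac{\tau}{3},z)}\Big)^{\chi}\Big(\frac{\Theta_{A_2^\vee,(0,1)}(q^{1/6},y)}{3\eta(q)^3}\Big)^{-K^2}\Sigma\big(q^{1/6}\big)\\ &+3\,\epsilon^{2c_1^2}\Big(\frac{1}{3\Phi(\tfrac{\tau+2}{3},z)}\Big)^{\chi}\Big(\frac{\Theta_{A_2^\vee,(0,1)}(\epsilon q^{1/6},y)}{3\eta(q)^3}\Big)^{-K^2}\Sigma\big(\epsilon q^{1/6}\big)\\ &+3(-1)^{\chi}\epsilon^{c_1^2}\Big(\frac{1}{3\Phi(\tfrac{\tau+1}{3},z)}\Big)^{\chi}\Big(\frac{\Theta_{A_2^\vee,(0,1)}(\epsilon^2 q^{1/6},y)}{3\eta(q)^3}\Big)^{-K^2}\Sigma\big(\epsilon^2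 q^{1/6}\big), \end{align*} where $\Sigma(x):=\sum_{a,b\in H^2(S,\mathbb{Z})}\mathrm{SW}(a)\mathrm{SW}(b)\,\epsilon^{(a-b)c_1}Z_+(x,y)^{ab}Z_-(x,y)^{(K-a)(K-b)}$.
   Context: $\chi=\chi(\mathcal{O}_S)$, $K=K_S$, $\epsilon=e^{2\pi i/3}$. $\mathrm{SW}(a)$ denotes the Seiberg–Witten invariant of $S$ in class $a$ in Mochizuki's convention ($\mathrm{SW}(a)=\widetilde{\mathrm{SW}}(2a-K)$ with $\widetilde{\mathrm{SW}}$ the usual invariant); only finitely many are nonzero. $M_S^H(3,c_1,c_2)$ is the moduli space of rank 3 $H$-stable torsion free sheaves with Chern classes $c_1,c_2$, carrying a perfect obstruction theory of virtual dimension $\mathrm{vd}=6c_2-2c_1^2-8\chi$; $\overline{\chi}^{\mathrm{vir}}_{-y}(M):=y^{-\mathrm{vd}/2}\chi^{\mathrm{vir}}_{-y}(M)$ is the normalized virtual $\chi_y$-genus of Fantechi–Göttsche. $\mathsf{Z}^{\mathrm{inst}}_{S,H,3,c_1}(q,y):=q^{-\chi/6+K^2/8}\sum_{c_2}\overline{\chi}^{\mathrm{vir}}_{-y}(M_S^H(3,c_1,c_2))\,q^{\mathrm{vd}/6}$. Theta functions: $\Theta_{A_2^\vee,(0,0)}(x,y)=\sum_{(m,n)\in\mathbb{Z}^2}x^{2(m^2+mn+n^2)}y^{m+n}$, $\Theta_{A_2^\vee,(0,1)}(x,y)=\sum_{(m,n)\in\mathbb{Z}^2}\epsilon^{m-n}x^{2(m^2+mn+n^2)}y^{m+n}$.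 $Z(x,y)=\Theta_{A_2^\vee,(0,0)}(x,y)/\Theta_{A_2^\vee,(0,1)}(x,y)$ and $Z_\pm(x,y)$ are the two roots in $\zeta$ of $\zeta^2-(Z(x,y)^2+3Z(x,y)Z(x,1))\zeta+Z(x,y)+3Z(x,1)=0$. Evaluation at $x=\epsilon^k q^{1/6}$ means $x^{2N}=\epsilon^{2kN}e^{2\pi i N\tau/3}$. $\overline{\eta}(x)=\prod_{n\ge1}(1-x^n)$, $\eta(q)=e^{\pi i\tau/12}\prod_{n\ge1}(1-q^n)$. $\psi_{S,c_1}(x,y):=9\Big(\frac{1}{3\prod_{n\ge1}(1-x^{2n})^{10}(1-x^{2n}y)(1-x^{2n}y^{-1})}\Big)^{\chi}\Big(\frac{\Theta_{A_2^\vee,(0,1)}(x,y)}{3\overline{\eta}(x^6)^3}\Big)^{-K^2}\Sigma(x)$. For $\tau'$ in the upper half plane and $z\in\mathbb{C}$, $\Phi(\tau',z):=(e^{\pi i z}-e^{-\pi i z})\,e^{\pi i\tau'}\prod_{n\ge1}(1-e^{2\pi i n\tau'})^{10}(1-e^{2\pi i n\tau'}e^{2\pi i z})(1-e^{2\pi i n\tau'}e^{-2\pi i z})$ (this is $\phi_{-2,1}^{1/2}\Delta^{1/2}$ at $q=e^{2\pi i\tau'}$). *)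

theory Defs
  imports "HOL-Analysis.Analysis"
begin

definition eps :: complex where "eps = exp (2 * pi * \<i> / 3)"

text \<open>Theta functions of the dual A2 lattice.\<close>
definition theta00 :: "complex \<Rightarrow> complex \<Rightarrow> complex" where
  "theta00 x y = infsum (\<lambda>(m::int, n::int). x ^ nat (2 * (m^2 + m*n + n^2)) * y powi (m + n)) UNIV"

definition theta01 :: "complex \<Rightarrow> complex \<Rightarrow> complex" where
  "theta01 x y = infsum (\<lambda>(m::int, n::int). eps powi (m - n) * x ^ nat (2 * (m^2 + m*n + n^2)) * y powi (m + n)) UNIV"

definition Zfun :: "complex \<Rightarrow> complex \<Rightarrow> complex" where
  "Zfun x y = theta00 x y / theta01 x y"

text \<open>The two roots of zeta^2 - (Z(x,y)^2 + 3 Z(x,y) Z(x,1)) zeta + Z(x,y) + 3 Z(x,1) = 0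
  (labelled via the principal square root; the expression Sigma below is symmetric under
  swapping them, given the Seiberg--Witten symmetry assumed in the theorem).\<close>
definition Zsum :: "complex \<Rightarrow> complex \<Rightarrow> complex" where
  "Zsum x y = (Zfun x y)^2 + 3 * Zfun x y * Zfun x 1"
definition Zprod :: "complex \<Rightarrow> complex \<Rightarrow> complex" where
  "Zprod x y = Zfun x y + 3 * Zfun x 1"
definition Zplus :: "complex \<Rightarrow> complex \<Rightarrow> complex" where
  "Zplus x y = (Zsum x y + csqrt ((Zsum x y)^2 - 4 * Zprod x y)) / 2"
definition Zminus :: "complex \<Rightarrow> complex \<Rightarrow> complex" where
  "Zminus x y = (Zsum x y - csqrt ((Zsum x y)^2 - 4 * Zprod x y)) / 2"

definition etabar :: "complex \<Rightarrow> complex" where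
  "etabar x = prodinf (\<lambda>n. 1 - x ^ Suc n)"

text \<open>Sigma(x) (depending also on y), for the abstract lattice H^2(S,Z) with
  intersection form ip, canonical class K, class c1 and SW invariants SW (finite support).\<close>
definition Sigma :: "('h::ab_group_add \<Rightarrow> 'h \<Rightarrow> int) \<Rightarrow> 'h \<Rightarrow> 'h \<Rightarrow> ('h \<Rightarrow> int)
    \<Rightarrow> complex \<Rightarrow> complex \<Rightarrow> complex" where
  "Sigma ip K c1 SW x y =
     (\<Sum>(a, b) \<in> {a. SW a \<noteq> 0} \<times> {b. SW b \<noteq> 0}.
        of_int (SW a * SW b) * eps powi (ip (a - b) c1)
        * Zplus x y powi (ip a b) * Zminus x y powi (ip (K - a) (K - b)))"

definition psi :: "('h::ab_group_add \<Rightarrow> 'h \<Rightarrow> int) \<Rightarrow> 'h \<Rightarrow> 'h \<Rightarrow> ('h \<Rightarrow> int) \<Rightarrow> int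
    \<Rightarrow> complex \<Rightarrow> complex \<Rightarrow> complex" where
  "psi ip K c1 SW chi x y =
     9 * (1 / (3 * prodinf (\<lambda>n. (1 - x ^ (2 * Suc n)) ^ 10 * (1 - x ^ (2 * Suc n) * y)
                                 * (1 - x ^ (2 * Suc n) / y)))) powi chi
       * (theta01 x y / (3 * etabar (x ^ 6) ^ 3)) powi (- ip K K)
       * Sigma ip K c1 SW x y"

definition psi_coeff :: "('h::ab_group_add \<Rightarrow> 'h \<Rightarrow> int) \<Rightarrow> 'h \<Rightarrow> 'h \<Rightarrow> ('h \<Rightarrow> int) \<Rightarrow> int
    \<Rightarrow> int \<Rightarrow> complex \<Rightarrow> complex" where
  "psi_coeff ip K c1 SW chi n y =
     (if n < 0 then 0
      else (deriv ^^ nat n) (\<lambda>x. psi ip K c1 SW chi x y) 0 / of_nat (fact (nat n)))"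

definition vdim :: "int \<Rightarrow> int \<Rightarrow> int \<Rightarrow> int" where
  "vdim c1sq chi c2 = 6 * c2 - 2 * c1sq - 8 * chi"

definition qpow :: "complex \<Rightarrow> real \<Rightarrow> complex" where
  "qpow \<tau> r = exp (2 * pi * \<i> * \<tau> * of_real r)"

text \<open>The instanton partition function, given the normalized virtual chi_y genera
  chivir c2 y of M_S^H(3,c1,c2), evaluated at q = exp(2 pi i tau), y = exp(2 pi i z).\<close>
definition Zinst_term :: "int \<Rightarrow> int \<Rightarrow> (int \<Rightarrow> complex \<Rightarrow> complex) \<Rightarrow> complex \<Rightarrow> complex
    \<Rightarrow> int \<Rightarrow> complex" where
  "Zinst_term c1sq chi chivir \<tau> z c2 =
     chivir c2 (exp (2 * pi * \<i> * z)) * qpow \<tau> (real_of_int (vdim c1sq chi c2) / 6)"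

definition Zinst :: "int \<Rightarrow> int \<Rightarrow> int \<Rightarrow> (int \<Rightarrow> complex \<Rightarrow> complex) \<Rightarrow> complex \<Rightarrow> complex
    \<Rightarrow> complex" where
  "Zinst K2 c1sq chi chivir \<tau> z =
     qpow \<tau> (- real_of_int chi / 6 + real_of_int K2 / 8)
     * infsum (Zinst_term c1sq chi chivir \<tau> z) UNIV"

text \<open>Phi(tau',z) = phi_{-2,1}^{1/2} Delta^{1/2}.\<close>
definition Phi :: "complex \<Rightarrow> complex \<Rightarrow> complex" where
  "Phi \<tau>' z = (exp (pi * \<i> * z) - exp (- pi * \<i> * z)) * exp (pi * \<i> * \<tau>')
     * prodinf (\<lambda>n. (1 - exp (2 * pi * \<i> * of_nat (Suc n) * \<tau>')) ^ 10
         * (1 - exp (2 * pi * \<i> * of_nat (Suc n) * \<tau>') * exp (2 * pi * \<i> * z))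
         * (1 - exp (2 * pi * \<i> * of_nat (Suc n) * \<tau>') * exp (- 2 * pi * \<i> * z)))"

definition eta :: "complex \<Rightarrow> complex" where
  "eta \<tau> = exp (pi * \<i> * \<tau> / 12) * prodinf (\<lambda>n. 1 - exp (2 * pi * \<i> * \<tau>) ^ Suc n)"

definition rhs_term :: "('h::ab_group_add \<Rightarrow> 'h \<Rightarrow> int) \<Rightarrow> 'h \<Rightarrow> 'h \<Rightarrow> ('h \<Rightarrow> int) \<Rightarrow> int
    \<Rightarrow> complex \<Rightarrow> nat \<Rightarrow> complex \<Rightarrow> complex \<Rightarrow> complex \<Rightarrow> complex" where
  "rhs_term ip K c1 SW chi cf k shift \<tau> z =
     (let x = eps ^ k * exp (2 * pi * \<i> * \<tau> / 6); y = exp (2 * pi * \<i> * z) in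
      3 * cf * (1 / (3 * Phi ((\<tau> + shift) / 3) z)) powi chi
        * (theta01 x y / (3 * eta \<tau> ^ 3)) powi (- ip K K)
        * Sigma ip K c1 SW x y)"

end

theory Submission
  imports Defs "HOL-Complex_Analysis.Complex_Analysis"
begin


lemma infsum_holo:
  fixes g :: "'i \<Rightarrow> complex \<Rightarrow> complex" and B :: "'i \<Rightarrow> real"
  assumes holo: "\<And>i. g i holomorphic_on UNIV"
    and bnd: "\<And>i x. x \<in> cball 0 r \<Longrightarrow> norm (g i x) \<le> B i"
    and summ: "B summable_on UNIV" and r: "r \<ge> 0"
  shows "(\<lambda>x. infsum (\<lambda>i. g i x) UNIV) holomorphic_on ball 0 r"
    and "\<And>x. x \<in> cball 0 r \<Longrightarrow> (\<lambda>i. g i x) summable_on UNIV"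
proof -
  have absx: "(\<lambda>i. norm (g i x)) summable_on UNIV" if "x \<in> cball 0 r" for x
    by (rule summable_on_comparison_test[OF summ]) (use bnd that in auto)
  have sx: "(\<lambda>i. g i x) summable_on UNIV" if "x \<in> cball 0 r" for x
    by (rule abs_summable_summable[OF absx[OF that]])
  thus "\<And>x. x \<in> cball 0 r \<Longrightarrow> (\<lambda>i. g i x) summable_on UNIV" by blast
  define f where "f = (\<lambda>F x. \<Sum>i\<in>F. g i x)"
  have ul: "uniform_limit (cball 0 r) f (\<lambda>x. infsum (\<lambda>i. g i x) UNIV) (finite_subsets_at_top UNIV)"
  proof (rule uniform_limitI)
    fix e::real assume e: "e>0"
    have "(sum B \<longlongrightarrow> infsum B UNIV) (finite_subsets_at_top UNIV)"
      using summ has_sum_infsum has_sum_def by blast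
    then have "\<forall>\<^sub>F F in finite_subsets_at_top UNIV. dist (sum B F) (infsum B UNIV) < e"
      using e by (rule tendstoD)
    then obtain X where X: "finite X" "\<And>Y. finite Y \<Longrightarrow> X \<subseteq> Y \<Longrightarrow> dist (sum B Y) (infsum B UNIV) < e"
      by (subst (asm) eventually_finite_subsets_at_top) (metis subset_UNIV)
    show "\<forall>\<^sub>F F in finite_subsets_at_top UNIV. \<forall>x\<in>cball 0 r. dist (f F x) (infsum (\<lambda>i. g i x) UNIV) < e"
      unfolding eventually_finite_subsets_at_top
    proof (intro exI[of _ X] conjI allI impI ballI)
      fix Y and x :: complex assume Y: "finite Y \<and> X \<subseteq> Y \<and> Y \<subseteq> UNIV" and x: "x \<in> cball 0 r"
      have "dist (f Y x) (infsum (\<lambda>i. g i x) UNIV) = norm (infsum (\<lambda>i. g i x) (UNIV - Y))"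
        using infsum_Diff[of "\<lambda>i. g i x" UNIV Y] sx[OF x] Y
        by (simp add: f_def dist_norm norm_minus_commute)
      also have "\<dots> \<le> infsum (\<lambda>i. norm (g i x)) (UNIV - Y)"
        by (rule norm_infsum_bound, rule summable_on_subset_banach[OF absx[OF x]]) simp
      also have "\<dots> \<le> infsum B (UNIV - Y)"
        by (rule infsum_mono, rule summable_on_subset_banach[OF absx[OF x]], simp,
            rule summable_on_subset_banach[OF summ], simp, rule bnd[OF x])
      also have "\<dots> = infsum B UNIV - sum B Y"
        using infsum_Diff[of B UNIV Y] summ Y by simp
      also have "\<dots> < e"
      proof -
        have "sum B Y \<le> infsum B UNIV"
        proof -
          have Bnn: "B i \<ge> 0" for i
          proof -
            have "(0::complex) \<in> cball 0 r" using r by simp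
            hence "norm (g i 0) \<le> B i" by (rule bnd)
            thus ?thesis by (rule order_trans[OF norm_ge_zero])
          qed
          have "infsum B Y \<le> infsum B UNIV"
            by (rule infsum_mono_neutral) (use summ Y Bnn in auto)
          thus ?thesis using Y by simp
        qed
        thus ?thesis using X(2)[of Y] Y by (simp add: dist_real_def)
      qed
      finally show "dist (f Y x) (infsum (\<lambda>i. g i x) UNIV) < e" .
    qed (use X in auto)
  qed
  show "(\<lambda>x. infsum (\<lambda>i. g i x) UNIV) holomorphic_on ball 0 r"
  proof (rule holomorphic_uniform_limit[OF _ ul])
    show "\<forall>\<^sub>F n in finite_subsets_at_top UNIV. continuous_on (cball 0 r) (f n) \<and> f n holomorphic_on ball 0 r"
      using holo unfolding f_def
      by (intro always_eventually allI conjI holomorphic_on_imp_continuous_on holomorphic_intros)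
         (auto intro: holomorphic_on_subset)
  qed (metis eventually_False finite_subsets_at_top_neq_bot trivial_limit_def)
qed


lemma prodinf_holo:
  fixes u :: "nat \<Rightarrow> complex \<Rightarrow> complex" and M :: "nat \<Rightarrow> real"
  assumes holo: "\<And>n. u n holomorphic_on UNIV"
    and bnd: "\<And>n x. x \<in> cball 0 r \<Longrightarrow> norm (u n x - 1) \<le> M n"
    and summ: "summable M" and half: "\<And>n. M n \<le> 1/2"
  shows "(\<lambda>x. prodinf (\<lambda>n. u n x)) holomorphic_on ball 0 r"
    and "\<And>x. x \<in> cball 0 r \<Longrightarrow> prodinf (\<lambda>n. u n x) \<noteq> 0"
proof -
  define P where "P = (\<lambda>N x. \<Prod>n<N. u n x)"
  have uc: "uniformly_convergent_on (cball 0 r) P"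
    unfolding P_def
  proof (rule uniformly_convergent_on_prod')
    show "continuous_on (cball 0 r) (u n)" for n
      using holo holomorphic_on_imp_continuous_on holomorphic_on_subset by blast
    show "compact (cball (0::complex) r)" by simp
    show "uniformly_convergent_on (cball 0 r) (\<lambda>N x. \<Sum>n<N. norm (u n x - 1))"
      by (rule Weierstrass_m_test'_ev[OF _ summ]) (use bnd in auto)
  qed
  have nz1: "u n x \<noteq> 0" if "x \<in> cball 0 r" for n x
  proof
    assume "u n x = 0"
    with bnd[OF that, of n] half[of n] show False by simp
  qed
  have cp: "convergent_prod (\<lambda>n. u n x)" if x: "x \<in> cball 0 r" for x
  proof -
    have "convergent_prod (\<lambda>n. 1 + (u n x - 1))"
    proof (rule summable_imp_convergent_prod_complex)
      show "summable (\<lambda>k. norm (u k x - 1))"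
        by (rule summable_comparison_test'[OF summ]) (use bnd x in auto)
      show "u k x - 1 \<noteq> - 1" for k using nz1[OF x] by simp
    qed
    thus ?thesis by simp
  qed
  show "\<And>x. x \<in> cball 0 r \<Longrightarrow> prodinf (\<lambda>n. u n x) \<noteq> 0"
    using cp nz1 prodinf_nonzero by blast
  have lim: "(\<lambda>N. P N x) \<longlonglongrightarrow> prodinf (\<lambda>n. u n x)" if x: "x \<in> cball 0 r" for x
    using convergent_prod_LIMSEQ[OF cp[OF x]] LIMSEQ_lessThan_iff_atMost[of "\<lambda>A. \<Prod>n\<in>A. u n x"]
    unfolding P_def by simp
  obtain g where g: "uniform_limit (cball 0 r) P g sequentially"
    using uc unfolding uniformly_convergent_on_def by blast
  have "g x = prodinf (\<lambda>n. u n x)" if x: "x \<in> cball 0 r" for x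
    using tendsto_uniform_limitI[OF g x] lim[OF x] LIMSEQ_unique by blast
  hence ul: "uniform_limit (cball 0 r) P (\<lambda>x. prodinf (\<lambda>n. u n x)) sequentially"
    using g uniform_limit_cong'[of "cball 0 r" P P g "\<lambda>x. prodinf (\<lambda>n. u n x)"] by simp
  show "(\<lambda>x. prodinf (\<lambda>n. u n x)) holomorphic_on ball 0 r"
  proof (rule holomorphic_uniform_limit[OF _ ul])
    show "\<forall>\<^sub>F n in sequentially. continuous_on (cball 0 r) (P n) \<and> P n holomorphic_on ball 0 r"
      using holo unfolding P_def
      by (intro always_eventually allI conjI holomorphic_on_imp_continuous_on holomorphic_intros)
         (auto intro: holomorphic_on_subset)
  qed simp
qed


lemma half_pow_int_summable: "(\<lambda>m::int. (1/2::real) ^ nat \<bar>m\<bar>) summable_on UNIV"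
proof -
  have g: "(\<lambda>n::nat. (1/2::real) ^ n) summable_on UNIV"
    by (subst summable_on_UNIV_nonneg_real_iff) (auto intro: summable_geometric)
  have 1: "(\<lambda>m::int. (1/2::real) ^ nat \<bar>m\<bar>) summable_on range int"
    by (subst summable_on_reindex) (auto simp: o_def g inj_on_def)
  have 2: "(\<lambda>m::int. (1/2::real) ^ nat \<bar>m\<bar>) summable_on range (\<lambda>n. - int n)"
    by (subst summable_on_reindex) (auto simp: o_def g inj_on_def)
  have "x \<in> range int \<union> range (\<lambda>n. - int n)" for x :: int
  proof (cases "x \<ge> 0")
    case True
    hence "x = int (nat x)" by simp
    thus ?thesis by blast
  next
    case False
    hence "x = - int (nat (-x))" by simp
    thus ?thesis by blast
  qed
  hence "UNIV = range int \<union> range (\<lambda>n. - int n)" by blast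
  thus ?thesis using summable_on_union[OF 1 2] by simp
qed

lemma half_pow_int2_summable:
  "(\<lambda>(m::int, n::int). (1/2::real) ^ nat \<bar>m\<bar> * (1/2) ^ nat \<bar>n\<bar>) summable_on UNIV"
proof -
  define b where "b = (\<lambda>m::int. (1/2::real) ^ nat \<bar>m\<bar>)"
  have bs: "b summable_on UNIV" using half_pow_int_summable unfolding b_def .
  have "(\<lambda>p. b (fst p) * b (snd p)) summable_on Product_Type.Sigma UNIV (\<lambda>_. UNIV)"
  proof (rule summable_on_SigmaI[where g = "\<lambda>m. b m * infsum b UNIV"])
    show "((\<lambda>n. b (fst (m, n)) * b (snd (m, n))) has_sum b m * infsum b UNIV) UNIV" for m
      using has_sum_cmult_right[OF has_sum_infsum[OF bs], of "b m"] by simp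
    show "(\<lambda>m. b m * infsum b UNIV) summable_on UNIV"
      using bs by (rule summable_on_cmult_left)
    show "0 \<le> b (fst (m, n)) * b (snd (m, n))" for m n by (simp add: b_def)
  qed
  moreover have "(\<lambda>p. b (fst p) * b (snd p)) = (\<lambda>(m::int, n::int). (1/2::real) ^ nat \<bar>m\<bar> * (1/2) ^ nat \<bar>n\<bar>)"
    by (auto simp: b_def fun_eq_iff)
  ultimately show ?thesis by simp
qed

lemma int_abs_le_sq: "\<bar>m::int\<bar> \<le> m^2"
proof -
  have "\<bar>m\<bar> \<le> \<bar>m\<bar> * \<bar>m\<bar>"
  proof (cases "m = 0")
    case False
    hence "1 \<le> \<bar>m\<bar>" by linarith
    hence "\<bar>m\<bar> * 1 \<le> \<bar>m\<bar> * \<bar>m\<bar>" by (intro mult_left_mono) auto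
    thus ?thesis by simp
  qed simp
  thus ?thesis by (simp add: power2_eq_square abs_mult[symmetric])
qed

lemma quad_ge: "nat \<bar>m\<bar> + nat \<bar>n\<bar> \<le> nat (2 * (m^2 + m*n + n^2))" for m n :: int
proof -
  have "2 * (m^2 + m*n + n^2) = m^2 + n^2 + (m+n)^2" by (simp add: power2_eq_square algebra_simps)
  moreover have "(m+n)^2 \<ge> 0" by simp
  ultimately have "\<bar>m\<bar> + \<bar>n\<bar> \<le> 2 * (m^2 + m*n + n^2)" using int_abs_le_sq[of m] int_abs_le_sq[of n] by linarith
  thus ?thesis by linarith
qed

lemma norm_powi_le:
  fixes y :: complex
  assumes "y \<noteq> 0"
  shows "norm (y powi k) \<le> (max (norm y) (1 / norm y)) ^ nat \<bar>k\<bar>"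
proof (cases "k \<ge> 0")
  case True
  hence "norm (y powi k) = norm y ^ nat k" by (simp add: power_int_def norm_power)
  also have "\<dots> \<le> (max (norm y) (1 / norm y)) ^ nat k" by (intro power_mono) auto
  finally show ?thesis using True by simp
next
  case False
  hence "norm (y powi k) = (1 / norm y) ^ nat (-k)"
    by (simp add: power_int_def norm_power norm_inverse norm_divide power_inverse inverse_eq_divide)
  also have "\<dots> \<le> (max (norm y) (1 / norm y)) ^ nat (-k)" by (intro power_mono) auto
  finally show ?thesis using False by simp
qed

lemma theta_holo:
  fixes y :: complex and c :: "int \<times> int \<Rightarrow> complex"
  assumes y: "y \<noteq> 0" and c: "\<And>p. norm (c p) \<le> 1"
  obtains r where "r > 0"
    "(\<lambda>x. infsum (\<lambda>(m::int,n::int). c (m,n) * x ^ nat (2*(m^2+m*n+n^2)) * y powi (m+n)) UNIV)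
       holomorphic_on ball 0 r"
proof -
  define A where "A = max (norm y) (1 / norm y)"
  have A1: "A \<ge> 1"
  proof (cases "norm y \<ge> 1")
    case False
    hence "1 / norm y \<ge> 1" using y by (simp add: field_simps)
    thus ?thesis unfolding A_def by linarith
  qed (auto simp: A_def)
  define r where "r = 1 / (2 * A)"
  have r0: "r > 0" and r1: "r \<le> 1" and rA: "r * A = 1/2" using A1 by (auto simp: r_def field_simps)
  define B where "B = (\<lambda>(m::int, n::int). (1/2::real) ^ nat \<bar>m\<bar> * (1/2) ^ nat \<bar>n\<bar>)"
  define g where "g = (\<lambda>(m::int,n::int) (x::complex). c (m,n) * x ^ nat (2*(m^2+m*n+n^2)) * y powi (m+n))"
  have bnd: "norm (g p x) \<le> B p" if x: "x \<in> cball 0 r" for p x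
  proof -
    obtain m n where p: "p = (m,n)" by (cases p)
    define k where "k = nat (2*(m^2+m*n+n^2))"
    define l where "l = nat \<bar>m\<bar> + nat \<bar>n\<bar>"
    have kl: "l \<le> k" using quad_ge[of m n] by (simp add: k_def l_def)
    have "norm (g p x) = norm (c (m,n)) * norm x ^ k * norm (y powi (m+n))"
      by (simp add: p g_def k_def norm_mult norm_power)
    also have "\<dots> \<le> 1 * norm x ^ k * A ^ nat \<bar>m+n\<bar>"
      unfolding A_def using c[of "(m,n)"] norm_powi_le[OF y, of "m+n"]
      by (intro mult_mono) auto
    also have "\<dots> \<le> r ^ l * A ^ l"
    proof (intro mult_mono)
      have "norm x ^ k \<le> r ^ k" using x by (intro power_mono) auto
      also have "\<dots> \<le> r ^ l" using kl r0 r1 by (intro power_decreasing) auto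
      finally show "1 * norm x ^ k \<le> r ^ l" by simp
      show "A ^ nat \<bar>m+n\<bar> \<le> A ^ l" unfolding l_def using A1 by (intro power_increasing) auto
    qed (use r0 A1 in simp_all)
    also have "\<dots> = (1/2) ^ l" by (simp add: power_mult_distrib[symmetric] rA)
    also have "\<dots> = B p" by (simp add: B_def p l_def power_add)
    finally show ?thesis .
  qed
  have "(\<lambda>x. infsum (\<lambda>p. g p x) UNIV) holomorphic_on ball 0 r"
  proof (rule infsum_holo(1)[of g r B])
    show "g i holomorphic_on UNIV" for i unfolding g_def by (cases i) (auto intro!: holomorphic_intros)
    show "B summable_on UNIV" unfolding B_def by (rule half_pow_int2_summable)
  qed (use bnd r0 in auto)
  moreover have "(\<lambda>p. g p x) = (\<lambda>(m::int,n::int). c (m,n) * x ^ nat (2*(m^2+m*n+n^2)) * y powi (m+n))" for x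
    by (auto simp: g_def fun_eq_iff)
  ultimately show ?thesis using that r0 by simp
qed


lemma norm_eps: "norm eps = 1"
  unfolding eps_def by (simp add: norm_exp_eq_Re)

lemma theta00_holo:
  assumes "y \<noteq> 0"
  obtains r where "r > 0" "(\<lambda>x. theta00 x y) holomorphic_on ball 0 r"
proof -
  obtain r where r: "r > 0"
    "(\<lambda>x. infsum (\<lambda>(m::int,n::int). (\<lambda>_. 1) (m,n) * x ^ nat (2*(m^2+m*n+n^2)) * y powi (m+n)) UNIV)
       holomorphic_on ball 0 r"
    using theta_holo[OF assms, of "\<lambda>_. 1"] by auto
  thus ?thesis using that unfolding theta00_def by simp
qed

lemma theta01_holo:
  assumes "y \<noteq> 0"
  obtains r where "r > 0" "(\<lambda>x. theta01 x y) holomorphic_on ball 0 r"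
proof -
  have c: "norm ((\<lambda>(m::int,n::int). eps powi (m-n)) p) \<le> 1" for p
    by (auto simp: norm_power_int norm_eps split: prod.splits)
  obtain r where r: "r > 0"
    "(\<lambda>x. infsum (\<lambda>(m::int,n::int). (\<lambda>(m,n). eps powi (m-n)) (m,n) * x ^ nat (2*(m^2+m*n+n^2)) * y powi (m+n)) UNIV)
       holomorphic_on ball 0 r"
    by (rule theta_holo[OF assms c])
  show ?thesis using that[of r] r unfolding theta01_def by simp
qed

lemma quad_zero: "nat (2 * (m^2 + m*n + n^2)) = 0 \<longleftrightarrow> m = 0 \<and> n = 0" for m n :: int
  using quad_ge[of m n] by auto

lemma infsum_delta00: "infsum (\<lambda>p. if p = (0::int,0::int) then (1::complex) else 0) UNIV = 1"
proof -
  have "infsum (\<lambda>p. if p = (0::int,0::int) then (1::complex) else 0) UNIV = infsum (\<lambda>p. if p = (0::int,0::int) then (1::complex) else 0) {(0,0)}"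
    by (rule infsum_cong_neutral) simp_all
  thus ?thesis by simp
qed

lemma theta00_0: "theta00 0 y = 1"
proof -
  have eq: "(\<lambda>(m::int,n::int). (0::complex) ^ nat (2*(m^2+m*n+n^2)) * y powi (m+n)) p = (if p = (0,0) then 1 else 0)" for p
  proof (cases p)
    case (Pair m n)
    show ?thesis
    proof (cases "m = 0 \<and> n = 0")
      case True thus ?thesis using Pair by simp
    next
      case False
      hence "nat (2*(m^2+m*n+n^2)) \<noteq> 0" using quad_zero by blast
      hence z: "(0::complex) ^ nat (2*(m^2+m*n+n^2)) = 0" by (metis zero_power gr0I)
      show ?thesis using Pair False z by simp
    qed
  qed
  have "theta00 0 y = infsum (\<lambda>p. if p = (0::int,0::int) then 1 else 0) UNIV"
    unfolding theta00_def by (rule infsum_cong) (rule eq)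
  also have "\<dots> = 1" by (rule infsum_delta00)
  finally show ?thesis .
qed

lemma theta01_0: "theta01 0 y = 1"
proof -
  have eq: "(\<lambda>(m::int,n::int). eps powi (m-n) * (0::complex) ^ nat (2*(m^2+m*n+n^2)) * y powi (m+n)) p = (if p = (0,0) then 1 else 0)" for p
  proof (cases p)
    case (Pair m n)
    show ?thesis
    proof (cases "m = 0 \<and> n = 0")
      case True thus ?thesis using Pair by simp
    next
      case False
      hence "nat (2*(m^2+m*n+n^2)) \<noteq> 0" using quad_zero by blast
      hence z: "(0::complex) ^ nat (2*(m^2+m*n+n^2)) = 0" by (metis zero_power gr0I)
      show ?thesis using Pair False z by simp
    qed
  qed
  have "theta01 0 y = infsum (\<lambda>p. if p = (0::int,0::int) then 1 else 0) UNIV"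
    unfolding theta01_def by (rule infsum_cong) (rule eq)
  also have "\<dots> = 1" by (rule infsum_delta00)
  finally show ?thesis .
qed

lemma even_pow: "(- x) ^ nat (2 * k) = (x::complex) ^ nat (2 * k)" for k :: int
proof -
  have "nat (2 * k) = 2 * nat k" by simp
  thus ?thesis by (simp add: power_mult)
qed

lemma theta00_even: "theta00 (-x) y = theta00 x y"
  unfolding theta00_def even_pow ..

lemma theta01_even: "theta01 (-x) y = theta01 x y"
  unfolding theta01_def even_pow ..


fun ps :: "complex \<Rightarrow> complex \<Rightarrow> nat \<Rightarrow> complex" where
  "ps s e 0 = 2"
| "ps s e (Suc 0) = s"
| "ps s e (Suc (Suc d)) = s * ps s e (Suc d) - e * ps s e d"

lemma ps_eq: "ps (u + v) (u * v) d = u ^ d + v ^ d"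
  by (induction "u + v" "u * v" d rule: ps.induct) (simp_all add: algebra_simps)

lemma ps_holo [holomorphic_intros]:
  assumes "f holomorphic_on A" "g holomorphic_on A"
  shows "(\<lambda>x. ps (f x) (g x) d) holomorphic_on A"
proof (induction d rule: nat_less_induct)
  case (1 d)
  show ?case
  proof (cases d)
    case 0 thus ?thesis by simp
  next
    case (Suc d')
    show ?thesis
    proof (cases d')
      case 0 thus ?thesis using Suc assms by simp
    next
      case (Suc d'')
      have "(\<lambda>x. f x * ps (f x) (g x) (Suc d'') - g x * ps (f x) (g x) d'') holomorphic_on A"
        using 1 \<open>d = Suc d'\<close> Suc assms by (intro holomorphic_intros) auto
      thus ?thesis using \<open>d = Suc d'\<close> Suc by simp
    qed
  qed
qed

lemma sym_pair:
  fixes u v :: complex and p q :: int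
  assumes "u \<noteq> 0" "v \<noteq> 0"
  shows "u powi p * v powi q + u powi q * v powi p = (u * v) powi (min p q) * ps (u + v) (u * v) (nat \<bar>p - q\<bar>)"
proof -
  have *: "u powi a * v powi (a + int d) + u powi (a + int d) * v powi a = (u * v) powi a * ps (u + v) (u * v) d"
    for a :: int and d :: nat
    using assms by (simp add: ps_eq power_int_add power_int_mult_distrib algebra_simps)
  show ?thesis
  proof (cases "p \<le> q")
    case True
    have "q = p + int (nat \<bar>p - q\<bar>)" using True by simp
    then show ?thesis using *[of p "nat \<bar>p - q\<bar>"] True by (metis min_def)
  next
    case False
    have "p = q + int (nat \<bar>p - q\<bar>)" using False by simp
    then show ?thesis using *[of q "nat \<bar>p - q\<bar>"] False
      by (metis add.commute min_def nle_le)
  qed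
qed

lemma Sigma_sym:
  fixes ip :: "'h::ab_group_add \<Rightarrow> 'h \<Rightarrow> int" and u v :: complex
  assumes ip_sym: "\<And>a b. ip a b = ip b a"
    and SW_sym: "\<And>a. SW (K - a) = (-1) ^ N * SW a"
    and uv: "u \<noteq> 0" "v \<noteq> 0"
  shows "(\<Sum>(a, b) \<in> {a. SW a \<noteq> 0} \<times> {b. SW b \<noteq> 0}.
        of_int (SW a * SW b) * eps powi (ip (a - b) c1) * u powi (ip a b) * v powi (ip (K - a) (K - b)))
      = (\<Sum>(a, b) \<in> {a. SW a \<noteq> 0} \<times> {b. SW b \<noteq> 0}.
        of_int (SW a * SW b) * eps powi (ip (a - b) c1) *
          ((u * v) powi (min (ip a b) (ip (K - a) (K - b))) * ps (u + v) (u * v) (nat \<bar>ip a b - ip (K - a) (K - b)\<bar>))) / 2"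
proof -
  define S where "S = {a. SW a \<noteq> 0} \<times> {b. SW b \<noteq> 0}"
  define c where "c = (\<lambda>a b. of_int (SW a * SW b) * eps powi (ip (a - b) c1) :: complex)"
  define F where "F = (\<lambda>(a,b). c a b * u powi (ip a b) * v powi (ip (K - a) (K - b)))"
  define G where "G = (\<lambda>(a,b). c a b * u powi (ip (K - a) (K - b)) * v powi (ip a b))"
  define \<sigma> where "\<sigma> = (\<lambda>(a::'h,b::'h). (K - b, K - a))"
  have sw0: "SW (K - a) \<noteq> 0 \<longleftrightarrow> SW a \<noteq> 0" for a using SW_sym[of a] by simp
  have \<sigma>S: "\<sigma> p \<in> S" if "p \<in> S" for p using that sw0 by (auto simp: \<sigma>_def S_def split: prod.splits)
  have \<sigma>\<sigma>: "\<sigma> (\<sigma> p) = p" for p by (auto simp: \<sigma>_def split: prod.splits)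
  have sq: "((-1::int) ^ N) * ((-1) ^ N) = 1" by (simp add: power_mult_distrib[symmetric])
  have cs: "c (K - b) (K - a) = c a b" for a b
  proof -
    have e1: "SW (K - b) * SW (K - a) = SW a * SW b"
      using SW_sym[of a] SW_sym[of b] sq by (simp add: algebra_simps)
    have e2: "(K - b) - (K - a) = a - b" by (simp add: algebra_simps)
    show ?thesis unfolding c_def by (simp only: e1 e2)
  qed
  have FG: "F (\<sigma> p) = G p" for p
    by (cases p) (simp add: F_def G_def \<sigma>_def cs ip_sym[of "K - _" "K - _"] ip_sym[of b a for a b])
  have "sum F S = sum (F \<circ> \<sigma>) S"
    by (rule sum.reindex_bij_witness[of _ \<sigma> \<sigma>]) (use \<sigma>S \<sigma>\<sigma> in auto)
  hence FG2: "sum F S = sum G S" using FG by (simp add: o_def)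
  have "2 * sum F S = sum (\<lambda>p. F p + G p) S" using FG2 by (simp add: sum.distrib)
  also have "\<dots> = (\<Sum>(a, b) \<in> S. c a b *
          ((u * v) powi (min (ip a b) (ip (K - a) (K - b))) * ps (u + v) (u * v) (nat \<bar>ip a b - ip (K - a) (K - b)\<bar>)))"
  proof (rule sum.cong)
    fix p assume "p \<in> S"
    obtain a b where p: "p = (a,b)" by (cases p)
    show "F p + G p = (case p of (a, b) \<Rightarrow> c a b *
          ((u * v) powi (min (ip a b) (ip (K - a) (K - b))) * ps (u + v) (u * v) (nat \<bar>ip a b - ip (K - a) (K - b)\<bar>)))"
      using sym_pair[OF uv, of "ip a b" "ip (K - a) (K - b)"]
      by (simp add: p F_def G_def mult.assoc flip: distrib_left)
  qed simp
  finally show ?thesis unfolding S_def F_def c_def by (simp add: field_simps)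
qed


lemma pow_minus1_bound:
  fixes a :: complex
  assumes "norm a \<le> 2"
  shows "norm (a ^ n - 1) \<le> (2 ^ n - 1) * norm (a - 1)"
proof (induction n)
  case (Suc n)
  have "a ^ Suc n - 1 = a * (a ^ n - 1) + (a - 1)" by (simp add: algebra_simps)
  hence "norm (a ^ Suc n - 1) \<le> norm a * norm (a ^ n - 1) + norm (a - 1)"
    by (metis norm_mult norm_triangle_ineq)
  also have "\<dots> \<le> 2 * ((2 ^ n - 1) * norm (a - 1)) + norm (a - 1)"
    using assms Suc by (intro add_mono mult_mono) auto
  also have "\<dots> = (2 ^ Suc n - 1) * norm (a - 1)" by (simp add: algebra_simps)
  finally show ?case .
qed simp

lemma prod3_bound:
  fixes a b c :: complex
  shows "norm (a*b*c - 1) \<le> norm (a-1) * norm b * norm c + norm (b-1) * norm c + norm (c-1)"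
proof -
  have "a*b*c - 1 = (a-1)*b*c + (b-1)*c + (c-1)" by (simp add: algebra_simps)
  hence "norm (a*b*c - 1) \<le> norm ((a-1)*b*c) + norm ((b-1)*c) + norm (c-1)"
    by (metis norm_triangle_ineq order_trans add_right_mono)
  thus ?thesis by (simp add: norm_mult)
qed

definition K0 :: "complex \<Rightarrow> real" where
  "K0 y = 1023 * (1 + norm y) * (1 + 1 / norm y) + norm y * (1 + 1 / norm y) + 1 / norm y"

lemma factor_bound:
  fixes w y :: complex
  assumes w: "norm w \<le> 1" and y: "y \<noteq> 0"
  shows "norm ((1 - w) ^ 10 * (1 - w * y) * (1 - w / y) - 1) \<le> K0 y * norm w"
proof -
  have n1: "norm (1 - w) \<le> 2" using norm_triangle_ineq4[of 1 w] w by simp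
  have a: "norm ((1 - w) ^ 10 - 1) \<le> 1023 * norm w"
    using pow_minus1_bound[OF n1, of 10] by (simp add: norm_minus_commute)
  have b1: "norm (1 - w * y) \<le> 1 + norm y"
  proof -
    have "norm (1 - w * y) \<le> 1 + norm w * norm y" using norm_triangle_ineq4[of 1 "w*y"] by (simp add: norm_mult)
    also have "\<dots> \<le> 1 + norm y" using w mult_left_le_one_le[of "norm y" "norm w"] by simp
    finally show ?thesis .
  qed
  have c1: "norm (1 - w / y) \<le> 1 + 1 / norm y"
  proof -
    have "norm (1 - w / y) \<le> 1 + norm w / norm y" using norm_triangle_ineq4[of 1 "w/y"] by (simp add: norm_divide)
    also have "\<dots> \<le> 1 + 1 / norm y" using w by (simp add: divide_right_mono)
    finally show ?thesis .
  qed
  have b2: "norm ((1 - w * y) - 1) = norm w * norm y" by (simp add: norm_mult)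
  have c2: "norm ((1 - w / y) - 1) = norm w / norm y" by (simp add: norm_divide)
  have "norm ((1 - w) ^ 10 * (1 - w * y) * (1 - w / y) - 1)
    \<le> norm ((1 - w) ^ 10 - 1) * norm (1 - w * y) * norm (1 - w / y) + norm ((1 - w * y) - 1) * norm (1 - w / y) + norm ((1 - w / y) - 1)"
    by (rule prod3_bound)
  also have "\<dots> \<le> (1023 * norm w) * (1 + norm y) * (1 + 1 / norm y) + (norm w * norm y) * (1 + 1 / norm y) + norm w / norm y"
    unfolding b2 c2 using a b1 c1 by (intro add_mono mult_mono) auto
  also have "\<dots> = K0 y * norm w" by (simp add: K0_def algebra_simps)
  finally show ?thesis .
qed

lemma K0_pos: "y \<noteq> 0 \<Longrightarrow> K0 y > 0"
  unfolding K0_def by (intro add_pos_pos mult_pos_pos) auto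

lemma geom_summ: "0 \<le> r \<Longrightarrow> r < 1 \<Longrightarrow> summable (\<lambda>n. C * r ^ Suc n :: real)"
  by (intro summable_mult) (simp add: summable_geometric)

lemma P_holo:
  fixes y :: complex
  assumes y: "y \<noteq> 0"
  obtains r where "r > 0" "r \<le> 1/2"
    "(\<lambda>x. prodinf (\<lambda>n. (1 - x ^ (2 * Suc n)) ^ 10 * (1 - x ^ (2 * Suc n) * y) * (1 - x ^ (2 * Suc n) / y))) holomorphic_on ball 0 r"
    "\<And>x. x \<in> ball 0 r \<Longrightarrow> prodinf (\<lambda>n. (1 - x ^ (2 * Suc n)) ^ 10 * (1 - x ^ (2 * Suc n) * y) * (1 - x ^ (2 * Suc n) / y)) \<noteq> 0"
proof -
  define r where "r = min (1/2) (1 / (2 * K0 y))"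
  have K: "K0 y > 0" by (rule K0_pos[OF y])
  have r0: "r > 0" "r \<le> 1/2" "K0 y * r \<le> 1/2" using K by (auto simp: r_def min_def field_simps)
  define u where "u = (\<lambda>n x. (1 - x ^ (2 * Suc n)) ^ 10 * (1 - x ^ (2 * Suc n) * y) * (1 - x ^ (2 * Suc n) / y))"
  define M where "M = (\<lambda>n. K0 y * r ^ Suc n)"
  have bnd: "norm (u n x - 1) \<le> M n" if x: "x \<in> cball 0 r" for n x
  proof -
    have nx: "norm x \<le> r" using x by simp
    have "norm (x ^ (2 * Suc n)) \<le> r ^ (2 * Suc n)" unfolding norm_power by (intro power_mono nx) simp
    also have "\<dots> \<le> r ^ Suc n" using r0 by (intro power_decreasing) auto
    finally have w: "norm (x ^ (2 * Suc n)) \<le> r ^ Suc n" .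
    have w1: "norm (x ^ (2 * Suc n)) \<le> 1"
      using w r0 power_le_one[of r "Suc n"] by linarith
    have "norm (u n x - 1) \<le> K0 y * norm (x ^ (2 * Suc n))"
      unfolding u_def by (rule factor_bound[OF w1 y])
    also have "\<dots> \<le> M n" unfolding M_def using K w by (intro mult_left_mono) auto
    finally show ?thesis .
  qed
  have half: "M n \<le> 1/2" for n
  proof -
    have "r ^ Suc n \<le> r" using r0 power_decreasing[of 1 "Suc n" r] by simp
    hence "M n \<le> K0 y * r" unfolding M_def using K by (intro mult_left_mono) auto
    thus ?thesis using r0 by linarith
  qed
  have summ: "summable M" unfolding M_def by (rule geom_summ) (use r0 in auto)
  have holo: "u n holomorphic_on UNIV" for n unfolding u_def by (intro holomorphic_intros) (use y in auto)
  show ?thesis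
    using prodinf_holo[OF holo bnd summ half] r0 that unfolding u_def by auto
qed

lemma E_holo:
  obtains r where "r > 0" "r \<le> 1/2"
    "(\<lambda>x. etabar (x ^ 6)) holomorphic_on ball 0 r"
    "\<And>x. x \<in> ball 0 r \<Longrightarrow> etabar (x ^ 6) \<noteq> 0"
proof -
  define r :: real where "r = 1/2"
  define u where "u = (\<lambda>n (x::complex). 1 - (x ^ 6) ^ Suc n)"
  define M where "M = (\<lambda>n. 1 * r ^ Suc n)"
  have bnd: "norm (u n x - 1) \<le> M n" if x: "x \<in> cball 0 r" for n x
  proof -
    have nx: "norm x \<le> r" using x by simp
    have "norm ((x ^ 6) ^ Suc n) = norm x ^ (6 * Suc n)" by (simp only: norm_power power_mult)
    also have "\<dots> \<le> r ^ (6 * Suc n)" by (intro power_mono nx) simp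
    also have "\<dots> \<le> r ^ Suc n" by (intro power_decreasing) (auto simp: r_def)
    finally show ?thesis by (simp add: u_def M_def)
  qed
  have half: "M n \<le> 1/2" for n
    using power_decreasing[of 1 "Suc n" r] by (simp add: M_def r_def)
  have summ: "summable M" unfolding M_def by (rule geom_summ) (auto simp: r_def)
  have holo: "u n holomorphic_on UNIV" for n unfolding u_def by (intro holomorphic_intros)
  have e: "etabar (x ^ 6) = prodinf (\<lambda>n. u n x)" for x by (simp add: etabar_def u_def)
  have h1: "(\<lambda>x. prodinf (\<lambda>n. u n x)) holomorphic_on ball 0 r" by (rule prodinf_holo(1)[OF holo bnd summ half])
  have h2: "prodinf (\<lambda>n. u n x) \<noteq> 0" if "x \<in> ball 0 r" for x
    using prodinf_holo(2)[OF holo bnd summ half] that by auto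
  show ?thesis by (rule that[of r]) (use h1 h2 in \<open>auto simp: r_def e\<close>)
qed


lemma nonzero_near0:
  fixes f :: "complex \<Rightarrow> complex"
  assumes "f holomorphic_on ball 0 r" "r > 0" "f 0 \<noteq> 0"
  obtains e where "e > 0" "e \<le> r" "\<And>x. x \<in> ball 0 e \<Longrightarrow> f x \<noteq> 0"
proof -
  have "continuous (at 0) f"
    using assms(1,2) holomorphic_on_imp_continuous_on continuous_on_eq_continuous_at[OF open_ball]
    by (metis centre_in_ball)
  then obtain \<epsilon> where "\<epsilon> > 0" "\<And>y. dist 0 y < \<epsilon> \<Longrightarrow> f y \<noteq> 0"
    using continuous_at_avoid[of 0 f 0] assms(3) by blast
  thus ?thesis using that[of "min \<epsilon> r"] assms(2) by (auto simp: dist_norm)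
qed

lemma psi_holo:
  fixes ip :: "'h::ab_group_add \<Rightarrow> 'h \<Rightarrow> int" and y :: complex
  assumes y: "y \<noteq> 0" and ip_sym: "\<And>a b. ip a b = ip b a"
    and SW_sym: "\<And>a. SW (K - a) = (-1) ^ N * SW a"
  obtains R where "R > 0" "(\<lambda>x. psi ip K c1 SW chi x y) holomorphic_on ball 0 R"
proof -
  obtain r1 where r1: "r1 > 0" "(\<lambda>x. theta00 x y) holomorphic_on ball 0 r1" using theta00_holo[OF y] by blast
  obtain r2 where r2: "r2 > 0" "(\<lambda>x. theta01 x y) holomorphic_on ball 0 r2" using theta01_holo[OF y] by blast
  obtain r3 where r3: "r3 > 0" "(\<lambda>x. theta00 x 1) holomorphic_on ball 0 r3" using theta00_holo[of 1] by auto
  obtain r4 where r4: "r4 > 0" "(\<lambda>x. theta01 x 1) holomorphic_on ball 0 r4" using theta01_holo[of 1] by auto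
  obtain e1 where e1: "e1 > 0" "e1 \<le> r2" "\<And>x. x \<in> ball 0 e1 \<Longrightarrow> theta01 x y \<noteq> 0"
    using nonzero_near0[OF r2(2) r2(1)] theta01_0 by auto
  obtain e2 where e2: "e2 > 0" "e2 \<le> r4" "\<And>x. x \<in> ball 0 e2 \<Longrightarrow> theta01 x 1 \<noteq> 0"
    using nonzero_near0[OF r4(2) r4(1)] theta01_0 by auto
  define r5 where "r5 = min (min r1 r3) (min e1 e2)"
  have r5: "r5 > 0" using r1 r3 e1 e2 by (simp add: r5_def)
  have sub: "ball 0 r5 \<subseteq> ball 0 r1" "ball 0 r5 \<subseteq> ball 0 r3" "ball 0 r5 \<subseteq> ball 0 e1" "ball 0 r5 \<subseteq> ball 0 e2"
    by (auto simp: r5_def)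
  have sub2: "ball 0 r5 \<subseteq> ball 0 r2" "ball 0 r5 \<subseteq> ball 0 r4" using sub e1 e2 by auto
  have Zy: "(\<lambda>x. Zfun x y) holomorphic_on ball 0 r5"
    unfolding Zfun_def
    by (intro holomorphic_intros holomorphic_on_subset[OF r1(2) sub(1)] holomorphic_on_subset[OF r2(2) sub2(1)])
       (use e1 sub in blast)
  have Z1: "(\<lambda>x. Zfun x 1) holomorphic_on ball 0 r5"
    unfolding Zfun_def
    by (intro holomorphic_intros holomorphic_on_subset[OF r3(2) sub(2)] holomorphic_on_subset[OF r4(2) sub2(2)])
       (use e2 sub in blast)
  have Zs: "(\<lambda>x. Zsum x y) holomorphic_on ball 0 r5" unfolding Zsum_def by (intro holomorphic_intros Zy Z1)
  have Zp: "(\<lambda>x. Zprod x y) holomorphic_on ball 0 r5" unfolding Zprod_def by (intro holomorphic_intros Zy Z1)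
  have Zp0: "Zprod 0 y = 4" by (simp add: Zprod_def Zfun_def theta00_0 theta01_0)
  obtain e3 where e3: "e3 > 0" "e3 \<le> r5" "\<And>x. x \<in> ball 0 e3 \<Longrightarrow> Zprod x y \<noteq> 0"
    using nonzero_near0[OF Zp r5] Zp0 by auto
  have sub3: "ball 0 e3 \<subseteq> ball 0 r5" using e3 by auto
  define Sig' where "Sig' = (\<lambda>x. (\<Sum>(a, b) \<in> {a. SW a \<noteq> 0} \<times> {b. SW b \<noteq> 0}.
        of_int (SW a * SW b) * eps powi (ip (a - b) c1) *
          ((Zprod x y) powi (min (ip a b) (ip (K - a) (K - b))) * ps (Zsum x y) (Zprod x y) (nat \<bar>ip a b - ip (K - a) (K - b)\<bar>))) / 2)"
  have pm: "Zplus x y + Zminus x y = Zsum x y" "Zplus x y * Zminus x y = Zprod x y" for x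
  proof -
    show "Zplus x y + Zminus x y = Zsum x y" by (simp add: Zplus_def Zminus_def field_simps)
    have "Zplus x y * Zminus x y = ((Zsum x y)^2 - (csqrt ((Zsum x y)^2 - 4 * Zprod x y))^2) / 4"
      by (simp add: Zplus_def Zminus_def power2_eq_square field_simps)
    also have "\<dots> = Zprod x y" by (simp add: power2_csqrt)
    finally show "Zplus x y * Zminus x y = Zprod x y" .
  qed
  have SigEq: "Sigma ip K c1 SW x y = Sig' x" if x: "x \<in> ball 0 e3" for x
  proof -
    have nz: "Zplus x y \<noteq> 0" "Zminus x y \<noteq> 0" using e3(3)[OF x] pm(2)[of x] by auto
    show ?thesis
      unfolding Sigma_def Sig'_def
      using Sigma_sym[of ip SW K N "Zplus x y" "Zminus x y" c1, OF ip_sym SW_sym nz] by (simp only: pm)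
  qed
  have Sig'h: "Sig' holomorphic_on ball 0 e3"
    unfolding Sig'_def
    by (intro holomorphic_intros holomorphic_on_subset[OF Zs sub3] holomorphic_on_subset[OF Zp sub3])
       (use e3 in \<open>auto intro!: holomorphic_intros holomorphic_on_subset[OF Zs sub3] holomorphic_on_subset[OF Zp sub3]\<close>)
  have Sigh: "(\<lambda>x. Sigma ip K c1 SW x y) holomorphic_on ball 0 e3"
    by (rule holomorphic_transform[OF Sig'h]) (simp add: SigEq)
  obtain rP where rP: "rP > 0" "rP \<le> 1/2"
    "(\<lambda>x. prodinf (\<lambda>n. (1 - x ^ (2 * Suc n)) ^ 10 * (1 - x ^ (2 * Suc n) * y) * (1 - x ^ (2 * Suc n) / y))) holomorphic_on ball 0 rP"
    "\<And>x. x \<in> ball 0 rP \<Longrightarrow> prodinf (\<lambda>n. (1 - x ^ (2 * Suc n)) ^ 10 * (1 - x ^ (2 * Suc n) * y) * (1 - x ^ (2 * Suc n) / y)) \<noteq> 0"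
    using P_holo[OF y] by blast
  obtain rE where rE: "rE > 0" "rE \<le> 1/2"
    "(\<lambda>x. etabar (x ^ 6)) holomorphic_on ball 0 rE"
    "\<And>x. x \<in> ball 0 rE \<Longrightarrow> etabar (x ^ 6) \<noteq> 0"
    using E_holo by blast
  define R where "R = min e3 (min rP rE)"
  have R: "R > 0" using e3 rP rE by (simp add: R_def)
  have subR: "ball 0 R \<subseteq> ball 0 e3" "ball 0 R \<subseteq> ball 0 rP" "ball 0 R \<subseteq> ball 0 rE" "ball 0 R \<subseteq> ball 0 r2"
    using e3 sub2 by (auto simp: R_def)
  have Rle: "R \<le> rP" "R \<le> rE" "R \<le> e1" using e3 by (auto simp: R_def r5_def)
  have "(\<lambda>x. psi ip K c1 SW chi x y) holomorphic_on ball 0 R"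
    unfolding psi_def
    apply (intro holomorphic_intros holomorphic_on_subset[OF Sigh subR(1)]
        holomorphic_on_subset[OF rP(3) subR(2)] holomorphic_on_subset[OF rE(3) subR(3)]
        holomorphic_on_subset[OF r2(2) subR(4)])
    using rP(4) rE(4) e1(3) Rle by force+
  thus ?thesis using that R by blast
qed


definition om :: complex where "om = exp (2 * pi * \<i> / 6)"

lemma om_pow: "om ^ m = exp (of_nat m * (2 * pi * \<i> / 6))"
  unfolding om_def by (rule exp_of_nat_mult[symmetric])

lemma om6: "om ^ 6 = 1"
proof -
  have "om ^ 6 = exp (2 * of_real pi * \<i>)" unfolding om_pow by (simp add: field_simps)
  thus ?thesis by (simp only: exp_two_pi_i)
qed

lemma om3: "om ^ 3 = -1"
proof -
  have "om ^ 3 = exp (of_real pi * \<i>)" unfolding om_pow by (simp add: field_simps)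
  thus ?thesis by (simp only: exp_pi_i)
qed

lemma om2: "om ^ 2 = eps"
  unfolding om_pow eps_def by (simp add: field_simps)

lemma om_pow_eq_1: "om ^ m = 1 \<longleftrightarrow> 6 dvd m"
proof
  assume "6 dvd m"
  then obtain q where "m = 6 * q" by blast
  thus "om ^ m = 1" by (simp add: power_mult om6)
next
  assume "om ^ m = 1"
  hence "exp (of_nat m * (2 * pi * \<i> / 6)) = 1" by (simp add: om_pow)
  then obtain n :: int where n: "Im (of_nat m * (2 * pi * \<i> / 6)) = of_int (2 * n) * pi"
    unfolding exp_eq_1 by blast
  hence "real m * (2 * pi / 6) = real_of_int (2 * n) * pi" by simp
  hence "real m = 6 * real_of_int n" by (simp add: field_simps)
  hence "int m = 6 * n" by linarith
  thus "6 dvd m" by presburger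
qed

lemma rootsum: "(\<Sum>j<6. (om ^ m) ^ j) = (if 6 dvd m then 6 else 0)"
proof (cases "6 dvd m")
  case True thus ?thesis using om_pow_eq_1[of m] by simp
next
  case False
  hence ne: "om ^ m \<noteq> 1" using om_pow_eq_1 by blast
  have "(om ^ m) ^ 6 = 1" by (metis om6 power_mult mult.commute power_one)
  thus ?thesis using geometric_sum[OF ne, of 6] False by simp
qed

lemma filter6:
  fixes a :: "nat \<Rightarrow> complex" and f :: "complex \<Rightarrow> complex" and \<rho> :: nat
  assumes \<rho>: "\<rho> < 6"
    and sums: "\<And>j. (\<lambda>n. a n * (om ^ j * x) ^ n) sums f (om ^ j * x)"
  shows "(\<lambda>n. if n mod 6 = \<rho> then a n * x ^ n else 0) sums ((\<Sum>j<6. om ^ (j * (6 - \<rho>)) * f (om ^ j * x)) / 6)"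
proof -
  have s: "(\<lambda>n. \<Sum>j<6. om ^ (j * (6 - \<rho>)) * (a n * (om ^ j * x) ^ n)) sums (\<Sum>j<6. om ^ (j * (6 - \<rho>)) * f (om ^ j * x))"
    by (intro sums_sum sums_mult sums)
  have eq: "(\<Sum>j<6. om ^ (j * (6 - \<rho>)) * (a n * (om ^ j * x) ^ n)) = 6 * (if n mod 6 = \<rho> then a n * x ^ n else 0)" for n
  proof -
    have "(\<Sum>j<6. om ^ (j * (6 - \<rho>)) * (a n * (om ^ j * x) ^ n)) = a n * x ^ n * (\<Sum>j<6. (om ^ (n + (6 - \<rho>))) ^ j)"
      unfolding sum_distrib_left
      by (intro sum.cong refl) (simp add: power_mult_distrib power_add power_mult[symmetric] algebra_simps)
    also have "\<dots> = a n * x ^ n * (if 6 dvd (n + (6 - \<rho>)) then 6 else 0)" by (simp only: rootsum)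
    also have "6 dvd (n + (6 - \<rho>)) \<longleftrightarrow> n mod 6 = \<rho>" using \<rho> by presburger
    finally show ?thesis by simp
  qed
  have "(\<lambda>n. 6 * (if n mod 6 = \<rho> then a n * x ^ n else 0)) sums (\<Sum>j<6. om ^ (j * (6 - \<rho>)) * f (om ^ j * x))"
    using s unfolding eq .
  from sums_divide[OF this, of 6] show ?thesis by simp
qed

lemma Zfun_even: "Zfun (-x) y = Zfun x y"
  by (simp add: Zfun_def theta00_even theta01_even)

lemma Sigma_even: "Sigma ip K c1 SW (-x) y = Sigma ip K c1 SW x y"
  by (simp add: Sigma_def Zplus_def Zminus_def Zsum_def Zprod_def Zfun_even)

lemma psi_even: "psi ip K c1 SW chi (-x) y = psi ip K c1 SW chi x y"
proof -
  have "(-x) ^ 6 = x ^ 6" by simp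
  thus ?thesis by (simp add: psi_def Sigma_even theta01_even)
qed


lemma om4: "om ^ 4 = - om"
proof -
  have "om ^ 4 = om ^ (3 + 1)" by simp
  also have "\<dots> = om ^ 3 * om" by (simp only: power_add power_one_right)
  finally have "om ^ 4 = om ^ 3 * om" .
  thus ?thesis using om3 by simp
qed
lemma om5: "om ^ 5 = - (om ^ 2)"
proof -
  have "om ^ 5 = om ^ 3 * om ^ 2" by (simp flip: power_add)
  thus ?thesis using om3 by simp
qed

lemma six_to_three:
  fixes f :: "complex \<Rightarrow> complex"
  assumes even: "\<And>w. f (-w) = f w" and t: "even t"
  shows "(\<Sum>j<6. om ^ (j * t) * f (om ^ j * x)) = 2 * (\<Sum>k<3. eps ^ (k * t) * f (eps ^ k * x))"
proof -
  have o3t: "om ^ (3 * t) = 1" using t om3 by (simp add: power_mult)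
  have T3: "om ^ (3 * t) * f (om ^ 3 * x) = f x" using o3t om3 even[of x] by simp
  have T5: "om ^ (5 * t) * f (om ^ 5 * x) = om ^ (2 * t) * f (om ^ 2 * x)"
  proof -
    have "om ^ (5 * t) = om ^ (2 * t) * om ^ (3 * t)" by (simp flip: power_add add_mult_distrib)
    thus ?thesis using o3t om5 even[of "om ^ 2 * x"] by simp
  qed
  have T4: "om ^ (4 * t) * f (om ^ 4 * x) = om ^ t * f (om * x)"
  proof -
    have "om ^ (4 * t) = om ^ t * om ^ (3 * t)" by (simp flip: power_add add_mult_distrib)
    thus ?thesis using o3t om4 even[of "om * x"] by simp
  qed
  define g where "g = (\<lambda>j. om ^ (j * t) * f (om ^ j * x))"
  have s6: "(\<Sum>j<6. g j) = g 0 + g 1 + g 2 + g 3 + g 4 + g 5" by (simp add: eval_nat_numeral)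
  have s3: "(\<Sum>k<3. g (2 * k)) = g 0 + g 2 + g 4" by (simp add: eval_nat_numeral)
  have g3: "g 3 = g 0" using T3 by (simp add: g_def)
  have g5: "g 5 = g 2" using T5 by (simp add: g_def)
  have g4: "g 4 = g 1" using T4 by (simp add: g_def)
  have epsom: "eps ^ n = om ^ (2 * n)" for n by (simp add: om2[symmetric] power_mult)
  have "(\<Sum>k<3. eps ^ (k * t) * f (eps ^ k * x)) = (\<Sum>k<3. g (2 * k))"
    by (intro sum.cong refl) (simp add: g_def epsom mult.assoc)
  hence B: "(\<Sum>k<3. eps ^ (k * t) * f (eps ^ k * x)) = g 0 + g 2 + g 4" using s3 by (rule trans)
  have A: "(\<Sum>j<6. om ^ (j * t) * f (om ^ j * x)) = (\<Sum>j<6. g j)" by (simp only: g_def)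
  show ?thesis unfolding A B s6 g3 g4 g5 by (simp add: algebra_simps)
qed


lemma eps3: "eps ^ 3 = 1"
proof -
  have "eps ^ 3 = (om ^ 2) ^ 3" by (simp add: om2)
  also have "\<dots> = om ^ (2 * 3)" by (simp only: power_mult)
  also have "\<dots> = 1" using om6 by simp
  finally show ?thesis .
qed

lemma eps_pow: "eps ^ n = exp (of_nat n * (2 * pi * \<i> / 3))"
  unfolding eps_def by (rule exp_of_nat_mult[symmetric])

lemma xk_pow:
  assumes "2 * k = s + 3 * d"
  shows "(eps ^ k * exp (2 * pi * \<i> * \<tau> / 6)) ^ (2 * m) = exp (2 * pi * \<i> * of_nat m * ((\<tau> + of_nat s) / 3))"
proof -
  have "eps ^ (k * (2 * m)) = eps ^ (s * m) * (eps ^ 3) ^ (d * m)"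
  proof -
    have "k * (2 * m) = s * m + 3 * (d * m)" using assms by (metis mult.assoc mult.commute add_mult_distrib)
    thus ?thesis by (simp add: power_add power_mult)
  qed
  hence "eps ^ (k * (2 * m)) = eps ^ (s * m)" by (simp only: eps3 power_one mult_1_right)
  hence e: "eps ^ (k * (2 * m)) = exp (of_nat (s * m) * (2 * pi * \<i> / 3))" by (simp only: eps_pow)
  have x: "exp (2 * pi * \<i> * \<tau> / 6) ^ (2 * m) = exp (of_nat (2 * m) * (2 * pi * \<i> * \<tau> / 6))"
    by (rule exp_of_nat_mult[symmetric])
  have "(eps ^ k * exp (2 * pi * \<i> * \<tau> / 6)) ^ (2 * m) = eps ^ (k * (2 * m)) * exp (2 * pi * \<i> * \<tau> / 6) ^ (2 * m)"
    by (simp add: power_mult_distrib power_mult)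
  also have "\<dots> = exp (of_nat (s * m) * (2 * pi * \<i> / 3) + of_nat (2 * m) * (2 * pi * \<i> * \<tau> / 6))"
    unfolding e x by (simp add: exp_add)
  also have "of_nat (s * m) * (2 * pi * \<i> / 3) + of_nat (2 * m) * (2 * pi * \<i> * \<tau> / 6) = 2 * pi * \<i> * of_nat m * ((\<tau> + of_nat s) / 3)"
    by (simp add: field_simps)
  finally show ?thesis .
qed

lemma xk6: "(eps ^ k * exp (2 * pi * \<i> * \<tau> / 6)) ^ 6 = exp (2 * pi * \<i> * \<tau>)"
proof -
  have "k * 6 = 3 * (2 * k)" by simp
  hence "eps ^ (k * 6) = (eps ^ 3) ^ (2 * k)" by (simp only: power_mult)
  hence e: "eps ^ (k * 6) = 1" by (simp add: eps3)
  have "(eps ^ k * exp (2 * pi * \<i> * \<tau> / 6)) ^ 6 = eps ^ (k * 6) * exp (2 * pi * \<i> * \<tau> / 6) ^ 6"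
    by (simp only: power_mult_distrib power_mult)
  also have "\<dots> = exp (of_nat 6 * (2 * pi * \<i> * \<tau> / 6))"
    by (simp only: e mult_1_left exp_of_nat_mult)
  also have "\<dots> = exp (2 * pi * \<i> * \<tau>)"
    by (rule arg_cong[where f=exp]) simp
  finally show ?thesis .
qed

lemma term_id:
  fixes ip :: "'h::ab_group_add \<Rightarrow> 'h \<Rightarrow> int" and \<tau> z cf ek :: complex and k s d :: nat
  assumes D: "exp (pi * \<i> * z) - exp (- pi * \<i> * z) \<noteq> 0"
    and ks: "2 * k = s + 3 * d"
    and cf: "qpow \<tau> (- real_of_int chi / 6 + real_of_int (ip K K) / 8) * ek
              * exp (pi * \<i> * ((\<tau> + of_nat s) / 3)) powi chi
              * (exp (pi * \<i> * \<tau> / 12) ^ 3) powi (- ip K K) = cf"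
  shows "qpow \<tau> (- real_of_int chi / 6 + real_of_int (ip K K) / 8)
          * (1/3 * ek * psi ip K c1 SW chi (eps ^ k * exp (2 * pi * \<i> * \<tau> / 6)) (exp (2 * pi * \<i> * z)))
          / (exp (pi * \<i> * z) - exp (- pi * \<i> * z)) powi chi
        = rhs_term ip K c1 SW chi cf k s \<tau> z"
proof -
  define x where "x = eps ^ k * exp (2 * pi * \<i> * \<tau> / 6)"
  define y where "y = exp (2 * pi * \<i> * z)"
  define Dz where "Dz = exp (pi * \<i> * z) - exp (- pi * \<i> * z)"
  define \<tau>' where "\<tau>' = (\<tau> + of_nat s) / 3"
  define e where "e = exp (pi * \<i> * \<tau>')"
  define c where "c = exp (pi * \<i> * \<tau> / 12)"
  define Q where "Q = qpow \<tau> (- real_of_int chi / 6 + real_of_int (ip K K) / 8)"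
  define P where "P = prodinf (\<lambda>n. (1 - x ^ (2 * Suc n)) ^ 10 * (1 - x ^ (2 * Suc n) * y) * (1 - x ^ (2 * Suc n) / y))"
  define P' where "P' = prodinf (\<lambda>n. (1 - exp (2 * pi * \<i> * of_nat (Suc n) * \<tau>')) ^ 10
         * (1 - exp (2 * pi * \<i> * of_nat (Suc n) * \<tau>') * exp (2 * pi * \<i> * z))
         * (1 - exp (2 * pi * \<i> * of_nat (Suc n) * \<tau>') * exp (- 2 * pi * \<i> * z)))"
  define E where "E = etabar (exp (2 * pi * \<i> * \<tau>))"
  define \<theta> where "\<theta> = theta01 x y"
  define \<Sigma> where "\<Sigma> = Sigma ip K c1 SW x y"
  have Dne: "Dz \<noteq> 0" using D by (simp add: Dz_def)
  have ene: "e \<noteq> 0" "c \<noteq> 0" by (simp_all add: e_def c_def)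
  have xp: "x ^ (2 * Suc n) = exp (2 * pi * \<i> * of_nat (Suc n) * \<tau>')" for n
    unfolding x_def \<tau>'_def by (rule xk_pow[OF ks])
  have yinv: "w / y = w * exp (- 2 * pi * \<i> * z)" for w
    by (simp add: y_def exp_minus divide_inverse)
  have PP: "P = P'" unfolding P_def P'_def by (simp only: xp yinv, simp only: y_def)
  have Phi: "Phi \<tau>' z = Dz * e * P'" unfolding Phi_def Dz_def e_def P'_def ..
  have Ex: "etabar (x ^ 6) = E" unfolding E_def x_def xk6 ..
  have eta: "eta \<tau> = c * E" unfolding eta_def c_def E_def etabar_def ..
  have psi: "psi ip K c1 SW chi x y = 9 * (1 / (3 * P)) powi chi * (\<theta> / (3 * E ^ 3)) powi (- ip K K) * \<Sigma>"
    unfolding psi_def P_def \<theta>_def \<Sigma>_def Ex ..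
  have rhs: "rhs_term ip K c1 SW chi cf k s \<tau> z
      = 3 * cf * (1 / (3 * Phi \<tau>' z)) powi chi * (\<theta> / (3 * eta \<tau> ^ 3)) powi (- ip K K) * \<Sigma>"
    unfolding rhs_term_def Let_def x_def[symmetric] y_def[symmetric] \<tau>'_def \<theta>_def \<Sigma>_def ..
  have A: "1 / (3 * P) = (Dz * e) * (1 / (3 * Phi \<tau>' z))"
    unfolding Phi PP using Dne ene by (simp add: field_simps)
  have B: "\<theta> / (3 * E ^ 3) = (\<theta> / (3 * eta \<tau> ^ 3)) * c ^ 3"
    unfolding eta using ene by (simp add: field_simps power_mult_distrib)
  have cf': "Q * ek * e powi chi * (c ^ 3) powi (- ip K K) = cf"
    using cf by (simp add: Q_def e_def c_def \<tau>'_def)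
  have "Q * (1/3 * ek * psi ip K c1 SW chi x y) / Dz powi chi
      = Q * (1/3 * ek * (9 * ((Dz * e) * (1 / (3 * Phi \<tau>' z))) powi chi
          * ((\<theta> / (3 * eta \<tau> ^ 3)) * c ^ 3) powi (- ip K K) * \<Sigma>)) / Dz powi chi"
    unfolding psi A B ..
  also have "\<dots> = Q * (1/3 * ek * (9 * (Dz powi chi * e powi chi * (1 / (3 * Phi \<tau>' z)) powi chi)
          * ((\<theta> / (3 * eta \<tau> ^ 3)) powi (- ip K K) * (c ^ 3) powi (- ip K K)) * \<Sigma>)) / Dz powi chi"
    by (simp only: power_int_mult_distrib)
  also have "\<dots> = 3 * (Q * ek * e powi chi * (c ^ 3) powi (- ip K K))
          * (1 / (3 * Phi \<tau>' z)) powi chi * (\<theta> / (3 * eta \<tau> ^ 3)) powi (- ip K K) * \<Sigma>"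
  proof -
    define AA where "AA = (1 / (3 * Phi \<tau>' z)) powi chi"
    define BB where "BB = (\<theta> / (3 * eta \<tau> ^ 3)) powi (- ip K K)"
    define DD where "DD = Dz powi chi"
    define EE where "EE = e powi chi"
    define CC where "CC = (c ^ 3) powi (- ip K K)"
    have "DD \<noteq> 0" using Dne by (simp add: DD_def)
    hence "Q * (1/3 * ek * (9 * (DD * EE * AA) * (BB * CC) * \<Sigma>)) / DD = 3 * (Q * ek * EE * CC) * AA * BB * \<Sigma>"
      by (simp add: field_simps)
    thus ?thesis unfolding AA_def BB_def DD_def EE_def CC_def .
  qed
  also have "\<dots> = rhs_term ip K c1 SW chi cf k s \<tau> z" unfolding rhs cf' ..
  finally show ?thesis by (simp add: Q_def x_def y_def Dz_def)
qed


lemma cf_exp: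
  fixes \<tau> :: complex and chi K2 :: int and k s t :: nat
  shows "qpow \<tau> (- real_of_int chi / 6 + real_of_int K2 / 8) * eps ^ (k * t)
              * exp (pi * \<i> * ((\<tau> + of_nat s) / 3)) powi chi
              * (exp (pi * \<i> * \<tau> / 12) ^ 3) powi (- K2)
         = exp (2 * pi * \<i> * of_nat k * of_nat t / 3 + of_int chi * pi * \<i> * of_nat s / 3)"
proof -
  have "qpow \<tau> (- real_of_int chi / 6 + real_of_int K2 / 8) * eps ^ (k * t)
              * exp (pi * \<i> * ((\<tau> + of_nat s) / 3)) powi chi
              * (exp (pi * \<i> * \<tau> / 12) ^ 3) powi (- K2)
      = exp (2 * pi * \<i> * \<tau> * of_real (- real_of_int chi / 6 + real_of_int K2 / 8)
             + of_nat (k * t) * (2 * pi * \<i> / 3)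
             + of_int chi * (pi * \<i> * ((\<tau> + of_nat s) / 3))
             + of_int (- K2) * (of_nat 3 * (pi * \<i> * \<tau> / 12)))"
    unfolding qpow_def eps_pow exp_power_int exp_of_nat_mult[symmetric] exp_add ..
  also have "\<dots> = exp (2 * pi * \<i> * of_nat k * of_nat t / 3 + of_int chi * pi * \<i> * of_nat s / 3)"
    by (rule arg_cong[where f = exp]) (simp add: field_simps)
  finally show ?thesis .
qed

lemma exp_mod:
  assumes "a = b + of_int (2 * n) * pi * \<i>"
  shows "exp a = exp b"
  using assms exp_eq by blast

lemma cf0: "exp (2 * pi * \<i> * of_nat 0 * of_nat t / 3 + of_int chi * pi * \<i> * of_nat 0 / 3) = 1"
  by simp

lemma cf1:
  assumes t: "int t = 2 * c + 8 * chi + 6 * j"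
  shows "exp (2 * pi * \<i> * of_nat 1 * of_nat t / 3 + of_int chi * pi * \<i> * of_nat 2 / 3) = eps powi (2 * c)"
proof -
  have tt: "(of_nat t :: complex) = of_int (2 * c + 8 * chi + 6 * j)" by (metis t of_int_of_nat_eq)
  have "eps powi (2 * c) = exp (of_int (2 * c) * (2 * pi * \<i> / 3))" unfolding eps_def exp_power_int ..
  moreover have "exp (2 * pi * \<i> * of_nat 1 * of_nat t / 3 + of_int chi * pi * \<i> * of_nat 2 / 3) = exp (of_int (2 * c) * (2 * pi * \<i> / 3))"
    by (rule exp_mod[where n = "3 * chi + 2 * j"]) (simp add: tt field_simps)
  ultimately show ?thesis by simp
qed

lemma cf2:
  assumes t: "int t = 2 * c + 8 * chi + 6 * j"
  shows "exp (2 * pi * \<i> * of_nat 2 * of_nat t / 3 + of_int chi * pi * \<i> * of_nat 1 / 3) = (-1) powi chi * eps powi c"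
proof -
  have tt: "(of_nat t :: complex) = of_int (2 * c + 8 * chi + 6 * j)" by (metis t of_int_of_nat_eq)
  have "(-1) powi chi * eps powi c = exp (of_int chi * (pi * \<i>)) * exp (of_int c * (2 * pi * \<i> / 3))"
    unfolding eps_def exp_power_int[symmetric] by simp
  also have "\<dots> = exp (of_int chi * (pi * \<i>) + of_int c * (2 * pi * \<i> / 3))" by (simp add: exp_add)
  finally have e: "(-1) powi chi * eps powi c = exp (of_int chi * (pi * \<i>) + of_int c * (2 * pi * \<i> / 3))" .
  have "exp (2 * pi * \<i> * of_nat 2 * of_nat t / 3 + of_int chi * pi * \<i> * of_nat 1 / 3) = exp (of_int chi * (pi * \<i>) + of_int c * (2 * pi * \<i> / 3))"
    by (rule exp_mod[where n = "c + 4 * j + 5 * chi"]) (simp add: tt field_simps)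
  thus ?thesis using e by simp
qed


lemma norm_om: "norm om = 1" unfolding om_def by (simp add: norm_exp_eq_Re)

lemma D_nonzero:
  assumes "z \<notin> \<int>"
  shows "exp (pi * \<i> * z) - exp (- pi * \<i> * z) \<noteq> 0"
proof
  assume "exp (pi * \<i> * z) - exp (- pi * \<i> * z) = 0"
  hence "exp (pi * \<i> * z) = exp (- pi * \<i> * z)" by simp
  then obtain n :: int where n: "pi * \<i> * z = - pi * \<i> * z + of_int (2 * n) * pi * \<i>"
    unfolding exp_eq by blast
  hence "2 * (pi * \<i>) * z = 2 * (pi * \<i>) * of_int n" by (simp add: algebra_simps)
  hence "z = of_int n" by simp
  thus False using assms by (simp add: Ints_of_int)
qed

lemma norm_x_small:
  fixes R :: real and \<tau> :: complex
  assumes R: "R > 0" and Im: "Im \<tau> > - 3 * ln (R/2) / pi"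
  shows "norm (exp (2 * pi * \<i> * \<tau> / 6)) < R / 2"
proof -
  have "norm (exp (2 * pi * \<i> * \<tau> / 6)) = exp (- (pi * Im \<tau> / 3))"
    by (simp add: norm_exp_eq_Re)
  also have "\<dots> < exp (ln (R / 2))"
  proof (rule exp_less_mono)
    have "pi * Im \<tau> > pi * (- 3 * ln (R/2) / pi)" using Im by (intro mult_strict_left_mono) auto
    thus "- (pi * Im \<tau> / 3) < ln (R / 2)" by (simp add: field_simps)
  qed
  also have "\<dots> = R / 2" using R by simp
  finally show ?thesis .
qed

lemma rho_even: "even (6 - nat ((- 2 * c - 8 * q) mod 6))" for c q :: int
proof -
  have "(- 2 * c - 8 * q) mod 6 = 2 * ((- c - 4 * q) mod 3)"
    using mod_mult_mult1[of 2 "- c - 4 * q" 3] by (simp add: algebra_simps)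
  hence eq: "nat ((- 2 * c - 8 * q) mod 6) = 2 * nat ((- c - 4 * q) mod 3)" by simp
  have "6 - 2 * nat ((- c - 4 * q) mod 3) = 2 * (3 - nat ((- c - 4 * q) mod 3))" by simp
  thus ?thesis unfolding eq by simp
qed

lemma exists_c2:
  fixes n :: nat and c chi :: int
  assumes "int n mod 6 = (- 2 * c - 8 * chi) mod 6"
  shows "\<exists>c2. 6 * c2 - 2 * c - 8 * chi = int n"
  using assms by presburger

theorem corollary1p2:
  fixes ip :: "'h::ab_group_add \<Rightarrow> 'h \<Rightarrow> int"
    and K c1 :: 'h
    and SW :: "'h \<Rightarrow> int"
    and pg :: nat
    and chi :: int
    and chivir :: "int \<Rightarrow> complex \<Rightarrow> complex"
  assumes ip_sym: "\<And>a b. ip a b = ip b a"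
    and ip_add: "\<And>a b c. ip (a + b) c = ip a c + ip b c"
    and pg_pos: "pg > 0"
    and chi_def: "chi = 1 + int pg"
    and SW_finite: "finite {a. SW a \<noteq> 0}"
    and SW_sym: "\<And>a. SW (K - a) = (-1) ^ nat chi * SW a"
    and hyp: "\<And>c2 y. y \<noteq> 0 \<Longrightarrow>
                chivir c2 y = psi_coeff ip K c1 SW chi (vdim (ip c1 c1) chi c2) y"
  shows "\<forall>z. z \<notin> \<int> \<longrightarrow> (\<exists>T. \<forall>\<tau>. Im \<tau> > T \<longrightarrow>
           Zinst_term (ip c1 c1) chi chivir \<tau> z summable_on UNIV \<and>
           Zinst (ip K K) (ip c1 c1) chi chivir \<tau> z
             / (exp (pi * \<i> * z) - exp (- pi * \<i> * z)) powi chi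
           = rhs_term ip K c1 SW chi 1 0 0 \<tau> z
             + rhs_term ip K c1 SW chi (eps powi (2 * ip c1 c1)) 1 2 \<tau> z
             + rhs_term ip K c1 SW chi ((-1) powi chi * eps powi (ip c1 c1)) 2 1 \<tau> z)"
proof (intro allI impI)
  fix z :: complex assume zZ: "z \<notin> \<int>"
  define y where "y = exp (2 * pi * \<i> * z)"
  have y0: "y \<noteq> 0" by (simp add: y_def)
  have D: "exp (pi * \<i> * z) - exp (- pi * \<i> * z) \<noteq> 0" by (rule D_nonzero[OF zZ])
  have SW_sym': "\<And>a. SW (K - a) = (-1) ^ nat chi * SW a" by (rule SW_sym)
  obtain R where R: "R > 0" "(\<lambda>x. psi ip K c1 SW chi x y) holomorphic_on ball 0 R"
    using psi_holo[of y ip SW K "nat chi" c1 chi, OF y0 ip_sym SW_sym'] by blast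
  define f where "f = (\<lambda>x. psi ip K c1 SW chi x y)"
  define a where "a = (\<lambda>n. (deriv ^^ n) f 0 / fact n)"
  have ser: "(\<lambda>n. a n * w ^ n) sums f w" if "w \<in> ball 0 R" for w
    using holomorphic_power_series[OF R(2)[folded f_def] that] by (simp add: a_def)
  define T where "T = - 3 * ln (R/2) / pi"
  show "\<exists>T. \<forall>\<tau>. Im \<tau> > T \<longrightarrow>
           Zinst_term (ip c1 c1) chi chivir \<tau> z summable_on UNIV \<and>
           Zinst (ip K K) (ip c1 c1) chi chivir \<tau> z
             / (exp (pi * \<i> * z) - exp (- pi * \<i> * z)) powi chi
           = rhs_term ip K c1 SW chi 1 0 0 \<tau> z
             + rhs_term ip K c1 SW chi (eps powi (2 * ip c1 c1)) 1 2 \<tau> z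
             + rhs_term ip K c1 SW chi ((-1) powi chi * eps powi (ip c1 c1)) 2 1 \<tau> z"
  proof (intro exI[of _ T] allI impI)
    fix \<tau> :: complex assume Im: "Im \<tau> > T"
    define x where "x = exp (2 * pi * \<i> * \<tau> / 6)"
    have nx: "norm x < R / 2" unfolding x_def using norm_x_small[OF R(1)] Im by (simp add: T_def)
    have serj: "(\<lambda>n. a n * (om ^ j * x) ^ n) sums f (om ^ j * x)" for j
      by (rule ser) (use nx R(1) in \<open>simp add: norm_mult norm_power norm_om\<close>)
    define C where "C = - 2 * ip c1 c1 - 8 * chi"
    define \<rho> where "\<rho> = nat (C mod 6)"
    have \<rho>6: "\<rho> < 6" unfolding \<rho>_def by simp
    have \<rho>ev: "even (6 - \<rho>)" unfolding \<rho>_def C_def by (rule rho_even)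
    define h where "h = (\<lambda>n. if n mod 6 = \<rho> then a n * x ^ n else 0)"
    define S where "S = (\<Sum>j<6. om ^ (j * (6 - \<rho>)) * f (om ^ j * x)) / 6"
    have hs: "h sums S" unfolding h_def S_def by (rule filter6[OF \<rho>6 serj])
    have absx: "summable (\<lambda>n. norm (a n * x ^ n))"
    proof -
      have "(\<lambda>n. a n * (of_real (R/2)) ^ n) sums f (of_real (R/2))"
        by (rule ser) (use R(1) in simp)
      hence "summable (\<lambda>n. a n * (of_real (R/2)) ^ n)" by (rule sums_summable)
      thus ?thesis by (rule powser_insidea) (use nx R(1) in simp)
    qed
    have hn: "summable (\<lambda>n. norm (h n))"
      by (rule summable_comparison_test'[OF absx]) (simp add: h_def)
    have hhas: "(h has_sum S) UNIV" by (rule norm_summable_imp_has_sum[OF hn hs])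
    define v where "v = (\<lambda>c2. vdim (ip c1 c1) chi c2)"
    have vdef: "v c2 = 6 * c2 + C" for c2 by (simp add: v_def vdim_def C_def)
    have zt: "Zinst_term (ip c1 c1) chi chivir \<tau> z c2 = (if v c2 < 0 then 0 else h (nat (v c2)))" for c2
    proof -
      have chv: "chivir c2 (exp (2 * pi * \<i> * z)) = psi_coeff ip K c1 SW chi (v c2) y"
        using hyp[OF y0, of c2] by (simp add: y_def v_def)
      have Zt: "Zinst_term (ip c1 c1) chi chivir \<tau> z c2 = psi_coeff ip K c1 SW chi (v c2) y * qpow \<tau> (real_of_int (v c2) / 6)"
        unfolding Zinst_term_def chv v_def ..
      show ?thesis
      proof (cases "v c2 < 0")
        case True thus ?thesis unfolding Zt by (simp add: psi_coeff_def)
      next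
        case False
        hence nn: "v c2 \<ge> 0" by simp
        have pc: "psi_coeff ip K c1 SW chi (v c2) y = a (nat (v c2))"
          using False by (simp add: psi_coeff_def a_def f_def)
        have "2 * pi * \<i> * \<tau> * of_real (real_of_int (v c2) / 6) = of_nat (nat (v c2)) * (2 * pi * \<i> * \<tau> / 6)"
          using nn by (simp add: field_simps)
        hence qp: "qpow \<tau> (real_of_int (v c2) / 6) = x ^ nat (v c2)"
          unfolding qpow_def x_def by (simp only: exp_of_nat_mult)
        have "nat (v c2) mod 6 = nat (v c2 mod 6)" using nn by (simp add: nat_mod_distrib)
        also have "v c2 mod 6 = C mod 6" unfolding vdef by simp
        finally have hm: "nat (v c2) mod 6 = \<rho>" by (simp add: \<rho>_def)
        show ?thesis unfolding Zt pc qp using False hm by (simp add: h_def)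
      qed
    qed
    define A where "A = {c2. v c2 \<ge> 0}"
    define \<phi> where "\<phi> = (\<lambda>c2. nat (v c2))"
    have inj: "inj_on \<phi> A"
    proof (rule inj_onI)
      fix c d assume "c \<in> A" "d \<in> A" "\<phi> c = \<phi> d"
      hence "v c = v d" by (simp add: A_def \<phi>_def)
      thus "c = d" by (simp add: vdef)
    qed
    have img: "\<phi> ` A = {n. n mod 6 = \<rho>}"
    proof (intro equalityI subsetI)
      fix n assume "n \<in> \<phi> ` A"
      then obtain c2 where c2: "c2 \<in> A" "n = \<phi> c2" by blast
      hence nn: "v c2 \<ge> 0" by (simp add: A_def)
      have "nat (v c2) mod 6 = nat (v c2 mod 6)" using nn by (simp add: nat_mod_distrib)
      also have "v c2 mod 6 = C mod 6" unfolding vdef by simp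
      finally show "n \<in> {n. n mod 6 = \<rho>}" using c2 by (simp add: \<rho>_def \<phi>_def)
    next
      fix n assume "n \<in> {n. n mod 6 = \<rho>}"
      hence "n mod 6 = \<rho>" by simp
      hence nr: "n mod 6 = \<rho>" .
      have "int n mod 6 = int (n mod 6)" by (simp add: zmod_int)
      also have "\<dots> = int \<rho>" using nr by simp
      also have "\<dots> = C mod 6" unfolding \<rho>_def by simp
      finally have "int n mod 6 = C mod 6" .
      then obtain c2 where c2: "6 * c2 - 2 * ip c1 c1 - 8 * chi = int n"
        using exists_c2[of n "ip c1 c1" chi] by (auto simp: C_def)
      hence "v c2 = int n" by (simp add: vdef C_def)
      hence "c2 \<in> A" "\<phi> c2 = n" by (simp_all add: A_def \<phi>_def)
      thus "n \<in> \<phi> ` A" by (metis imageI)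
    qed
    have h1: "(h has_sum S) {n. n mod 6 = \<rho>}"
      using hhas by (subst has_sum_cong_neutral[where T = UNIV and g = h]) (auto simp: h_def)
    hence h2: "((h \<circ> \<phi>) has_sum S) A" using has_sum_reindex[OF inj, of h S] img by simp
    have h3: "(Zinst_term (ip c1 c1) chi chivir \<tau> z has_sum S) A"
      using h2 by (subst has_sum_cong[where g = "h \<circ> \<phi>"]) (auto simp: zt A_def \<phi>_def)
    have TERMS: "(Zinst_term (ip c1 c1) chi chivir \<tau> z has_sum S) UNIV"
      using h3 by (subst has_sum_cong_neutral[where T = A and g = "Zinst_term (ip c1 c1) chi chivir \<tau> z"])
         (auto simp: zt A_def)
    show "Zinst_term (ip c1 c1) chi chivir \<tau> z summable_on UNIV \<and>
           Zinst (ip K K) (ip c1 c1) chi chivir \<tau> z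
             / (exp (pi * \<i> * z) - exp (- pi * \<i> * z)) powi chi
           = rhs_term ip K c1 SW chi 1 0 0 \<tau> z
             + rhs_term ip K c1 SW chi (eps powi (2 * ip c1 c1)) 1 2 \<tau> z
             + rhs_term ip K c1 SW chi ((-1) powi chi * eps powi (ip c1 c1)) 2 1 \<tau> z"
    proof
      show "Zinst_term (ip c1 c1) chi chivir \<tau> z summable_on UNIV"
        using TERMS by (rule has_sum_imp_summable)
      define t where "t = 6 - \<rho>"
      have tev: "even t" unfolding t_def by (rule \<rho>ev)
      have tint: "int t = 2 * ip c1 c1 + 8 * chi + 6 * (1 + C div 6)"
      proof -
        have "int t = 6 - int \<rho>" using \<rho>6 by (simp add: t_def of_nat_diff)
        also have "int \<rho> = C mod 6" by (simp add: \<rho>_def)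
        also have "C mod 6 = C - C div 6 * 6" by (simp add: minus_div_mult_eq_mod)
        finally show ?thesis by (simp add: C_def algebra_simps)
      qed
      have Sinf: "infsum (Zinst_term (ip c1 c1) chi chivir \<tau> z) UNIV = S" by (rule infsumI[OF TERMS])
      have feven: "f (-w) = f w" for w by (simp add: f_def psi_even)
      have S3: "S = 2 * (\<Sum>k<3. eps ^ (k * t) * f (eps ^ k * x)) / 6"
        unfolding S_def t_def[symmetric] using six_to_three[of f t x, OF feven tev] by simp
      define Q where "Q = qpow \<tau> (- real_of_int chi / 6 + real_of_int (ip K K) / 8)"
      define Dz where "Dz = exp (pi * \<i> * z) - exp (- pi * \<i> * z)"
      define g where "g = (\<lambda>k. Q * (1/3 * eps ^ (k * t) * f (eps ^ k * x)) / Dz powi chi)"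
      define T0 where "T0 = eps ^ (0 * t) * f (eps ^ 0 * x)"
      define T1 where "T1 = eps ^ (1 * t) * f (eps ^ 1 * x)"
      define T2 where "T2 = eps ^ (2 * t) * f (eps ^ 2 * x)"
      have s3: "(\<Sum>k<3. eps ^ (k * t) * f (eps ^ k * x)) = T0 + T1 + T2"
        unfolding T0_def T1_def T2_def by (simp add: eval_nat_numeral)
      have lhs: "Zinst (ip K K) (ip c1 c1) chi chivir \<tau> z / Dz powi chi = g 0 + g 1 + g 2"
      proof -
        have "Zinst (ip K K) (ip c1 c1) chi chivir \<tau> z = Q * S"
          unfolding Zinst_def Sinf Q_def ..
        also have "\<dots> = Q * (2 * (T0 + T1 + T2) / 6)" unfolding S3 s3 ..
        finally have Z: "Zinst (ip K K) (ip c1 c1) chi chivir \<tau> z = Q * (2 * (T0 + T1 + T2) / 6)" .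
        have G: "g 0 + g 1 + g 2 = Q * (1/3 * T0) / Dz powi chi + Q * (1/3 * T1) / Dz powi chi + Q * (1/3 * T2) / Dz powi chi"
          unfolding g_def T0_def T1_def T2_def by (simp only: mult.assoc)
        have "Dz \<noteq> 0" using D by (simp add: Dz_def)
        thus ?thesis unfolding Z G by (simp add: field_simps)
      qed
      have g0: "g 0 = rhs_term ip K c1 SW chi 1 0 0 \<tau> z"
      proof -
        have cf: "qpow \<tau> (- real_of_int chi / 6 + real_of_int (ip K K) / 8) * eps ^ (0 * t)
              * exp (pi * \<i> * ((\<tau> + of_nat 0) / 3)) powi chi
              * (exp (pi * \<i> * \<tau> / 12) ^ 3) powi (- ip K K) = 1"
          using cf_exp[of \<tau> chi "ip K K" 0 t 0] cf0[of t chi] by (rule trans)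
        have "Q * (1/3 * eps ^ (0 * t) * f (eps ^ 0 * x)) / Dz powi chi = rhs_term ip K c1 SW chi (1) 0 (of_nat 0) \<tau> z"
          unfolding Q_def f_def x_def y_def Dz_def
          by (rule term_id[where k=0 and s=0 and d=0 and z=z and \<tau>=\<tau> and ek="eps ^ (0 * t)" and cf="1"
                and chi=chi and ip=ip and K=K, OF D _ cf]) simp
        thus ?thesis by (simp add: g_def)
      qed
      have g1: "g 1 = rhs_term ip K c1 SW chi (eps powi (2 * ip c1 c1)) 1 2 \<tau> z"
      proof -
        have cf: "qpow \<tau> (- real_of_int chi / 6 + real_of_int (ip K K) / 8) * eps ^ (1 * t)
              * exp (pi * \<i> * ((\<tau> + of_nat 2) / 3)) powi chi
              * (exp (pi * \<i> * \<tau> / 12) ^ 3) powi (- ip K K) = eps powi (2 * ip c1 c1)"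
          using cf_exp[of \<tau> chi "ip K K" 1 t 2] cf1[OF tint] by (rule trans)
        have "Q * (1/3 * eps ^ (1 * t) * f (eps ^ 1 * x)) / Dz powi chi = rhs_term ip K c1 SW chi (eps powi (2 * ip c1 c1)) 1 (of_nat 2) \<tau> z"
          unfolding Q_def f_def x_def y_def Dz_def
          by (rule term_id[where k=1 and s=2 and d=0 and z=z and \<tau>=\<tau> and ek="eps ^ (1 * t)" and cf="eps powi (2 * ip c1 c1)"
                and chi=chi and ip=ip and K=K, OF D _ cf]) simp
        thus ?thesis by (simp add: g_def)
      qed
      have g2: "g 2 = rhs_term ip K c1 SW chi ((-1) powi chi * eps powi (ip c1 c1)) 2 1 \<tau> z"
      proof -
        have cf: "qpow \<tau> (- real_of_int chi / 6 + real_of_int (ip K K) / 8) * eps ^ (2 * t)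
              * exp (pi * \<i> * ((\<tau> + of_nat 1) / 3)) powi chi
              * (exp (pi * \<i> * \<tau> / 12) ^ 3) powi (- ip K K) = (-1) powi chi * eps powi (ip c1 c1)"
          using cf_exp[of \<tau> chi "ip K K" 2 t 1] cf2[OF tint] by (rule trans)
        have "Q * (1/3 * eps ^ (2 * t) * f (eps ^ 2 * x)) / Dz powi chi = rhs_term ip K c1 SW chi ((-1) powi chi * eps powi (ip c1 c1)) 2 (of_nat 1) \<tau> z"
          unfolding Q_def f_def x_def y_def Dz_def
          by (rule term_id[where k=2 and s=1 and d=1 and z=z and \<tau>=\<tau> and ek="eps ^ (2 * t)" and cf="(-1) powi chi * eps powi (ip c1 c1)"
                and chi=chi and ip=ip and K=K, OF D _ cf]) simp
        thus ?thesis by (simp add: g_def)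
      qed
      show "Zinst (ip K K) (ip c1 c1) chi chivir \<tau> z
             / (exp (pi * \<i> * z) - exp (- pi * \<i> * z)) powi chi
           = rhs_term ip K c1 SW chi 1 0 0 \<tau> z
             + rhs_term ip K c1 SW chi (eps powi (2 * ip c1 c1)) 1 2 \<tau> z
             + rhs_term ip K c1 SW chi ((-1) powi chi * eps powi (ip c1 c1)) 2 1 \<tau> z"
        using lhs g0 g1 g2 by (simp add: Dz_def)
    qed
  qed
qed


end
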